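(* Let $\beta>0$, $\delta\in[0,\beta)$ and $q_2>0$. There exists $c>0$ such that for every $N\in\mathbb N$ and every $q\in(0,q_2]$, $$D_N(q,\delta)\le c\,e^{N\psi(q,\delta)}.$$
   Context: $c_\beta=\frac{1+e^{-\beta/2}}{1-e^{-\beta/2}}$, $\mathbf P_\beta(k)=e^{-\beta|k|/2}/c_\beta$ on $\mathbb Z$; $X=(X_i)_{i\ge0}$ is a random walk with $X_0=0$ and i.i.d. increments of law $\mathbf P_\beta$ (expectation $\mathbf E_\beta$), $A_N=\sum_{i=0}^NX_i$. $\mathcal L(h)=\log\mathbf E_\beta[e^{hX_1}]$ for $|h|<\beta/2$. $\mathcal G(h)=\int_0^1\mathcal L(h(x-\frac12))dx$, $\tilde h(q)$ the unique $h\in[0,\beta)$ with $\mathcal G'(h)=q$; $\mathcal H_\delta(s)=\int_0^1\mathcal L(sx+\delta-\frac\beta2)dx$ for $s\in(-\delta,\beta-\delta)$, $s_\delta(q)$ the unique solution of $\mathcal H_\delta'(s)=q$; $\delta_0(q)=\frac\beta2-\frac{\tilde h(q)}2$; $\psi(q,\delta)=\mathcal G(\tilde h(q))-q\tilde h(q)$ if $0\le\delta\le\delta_0(q)$ and $\mathcal H_\delta(s_\delta(q))-qs_\delta(q)$ if $\delta_0(q)<\delta<\beta$. $D_N(q,\delta)=\mathbf E_\beta\big[e^{(\delta-\beta/2)X_N}\mathbf 1\{A_N=qN^2,\ X_i>0\ \forall\,0<i\le N\}\big]$. *)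

theory Defs
  imports "HOL-Analysis.Analysis"
begin

definition c_beta :: "real \<Rightarrow> real" where
  "c_beta \<beta> = (1 + exp (- \<beta> / 2)) / (1 - exp (- \<beta> / 2))"

definition P_beta :: "real \<Rightarrow> int \<Rightarrow> real" where
  "P_beta \<beta> k = exp (- \<beta> * \<bar>real_of_int k\<bar> / 2) / c_beta \<beta>"

text \<open>Log-moment generating function L(h) = log E[exp(h X_1)], for |h| < beta/2.\<close>

definition LL :: "real \<Rightarrow> real \<Rightarrow> real" where
  "LL \<beta> h = ln (\<Sum>\<^sub>\<infinity>k\<in>(UNIV::int set). P_beta \<beta> k * exp (h * real_of_int k))"

definition GG :: "real \<Rightarrow> real \<Rightarrow> real" where
  "GG \<beta> h = integral {0..1} (\<lambda>x. LL \<beta> (h * (x - 1/2)))"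

definition h_tilde :: "real \<Rightarrow> real \<Rightarrow> real" where
  "h_tilde \<beta> q = (THE h. 0 \<le> h \<and> h < \<beta> \<and> deriv (GG \<beta>) h = q)"

definition HH :: "real \<Rightarrow> real \<Rightarrow> real \<Rightarrow> real" where
  "HH \<beta> \<delta> s = integral {0..1} (\<lambda>x. LL \<beta> (s * x + \<delta> - \<beta> / 2))"

definition s_delta :: "real \<Rightarrow> real \<Rightarrow> real \<Rightarrow> real" where
  "s_delta \<beta> \<delta> q = (THE s. - \<delta> < s \<and> s < \<beta> - \<delta> \<and> deriv (HH \<beta> \<delta>) s = q)"

definition delta0 :: "real \<Rightarrow> real \<Rightarrow> real" where
  "delta0 \<beta> q = \<beta> / 2 - h_tilde \<beta> q / 2"

definition psi :: "real \<Rightarrow> real \<Rightarrow> real \<Rightarrow> real" where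
  "psi \<beta> q \<delta> =
     (if 0 \<le> \<delta> \<and> \<delta> \<le> delta0 \<beta> q
      then GG \<beta> (h_tilde \<beta> q) - q * h_tilde \<beta> q
      else HH \<beta> \<delta> (s_delta \<beta> \<delta> q) - q * s_delta \<beta> \<delta> q)"

definition walk_X :: "int list \<Rightarrow> nat \<Rightarrow> int" where
  "walk_X ks i = sum_list (take i ks)"

definition walk_A :: "int list \<Rightarrow> nat \<Rightarrow> int" where
  "walk_A ks N = (\<Sum>i=0..N. walk_X ks i)"

definition path_prob :: "real \<Rightarrow> int list \<Rightarrow> real" where
  "path_prob \<beta> ks = (\<Prod>k\<leftarrow>ks. P_beta \<beta> k)"

definition DD :: "real \<Rightarrow> nat \<Rightarrow> real \<Rightarrow> real \<Rightarrow> real" where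
  "DD \<beta> N q \<delta> =
     (\<Sum>\<^sub>\<infinity>ks\<in>{ks. length ks = N \<and> real_of_int (walk_A ks N) = q * real N ^ 2
                 \<and> (\<forall>i. 0 < i \<and> i \<le> N \<longrightarrow> walk_X ks i > 0)}.
        path_prob \<beta> ks * exp ((\<delta> - \<beta> / 2) * real_of_int (walk_X ks N)))"

end

theory Submission
  imports Defs
begin


definition rr :: "real \<Rightarrow> real" where "rr \<beta> = exp (- \<beta> / 2)"

lemma rr_pos: "rr \<beta> > 0" by (simp add: rr_def)
lemma rr_lt1: "\<beta> > 0 \<Longrightarrow> rr \<beta> < 1" by (simp add: rr_def)

lemma rr_exp_lt1: "u < \<beta>/2 \<Longrightarrow> rr \<beta> * exp u < 1"
proof -
  assume "u < \<beta>/2"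
  then have "rr \<beta> * exp u = exp (u - \<beta>/2)" by (simp add: rr_def mult_exp_exp)
  also have "\<dots> < 1" using \<open>u < \<beta>/2\<close> by simp
  finally show ?thesis .
qed

lemma P_beta_nonneg_ge: "k \<ge> 0 \<Longrightarrow> P_beta \<beta> k * exp (h * real_of_int k)
   = (rr \<beta> * exp h) ^ nat k / c_beta \<beta>"
proof -
  assume k: "k \<ge> 0"
  have "(rr \<beta> * exp h) ^ nat k = exp (real (nat k) * (- \<beta>/2 + h))"
    by (simp add: rr_def power_mult_distrib exp_of_nat_mult[symmetric] mult_exp_exp algebra_simps)
  also have "\<dots> = exp (- \<beta> * \<bar>real_of_int k\<bar> / 2) * exp (h * real_of_int k)"
    using k by (simp add: mult_exp_exp algebra_simps)
  finally show ?thesis by (simp add: P_beta_def)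
qed

lemma P_beta_neg: "P_beta \<beta> (- int n - 1) * exp (h * real_of_int (- int n - 1))
   = (rr \<beta> * exp (-h)) ^ Suc n / c_beta \<beta>"
proof -
  have "(rr \<beta> * exp (-h)) ^ Suc n = exp (real (Suc n) * (- \<beta>/2 - h))"
    by (simp only: rr_def power_mult_distrib exp_of_nat_mult[symmetric] mult_exp_exp) (simp add: algebra_simps)
  also have "\<dots> = exp (- \<beta> * \<bar>real_of_int (- int n - 1)\<bar> / 2) * exp (h * real_of_int (- int n - 1))"
    by (simp add: mult_exp_exp algebra_simps)
  finally show ?thesis by (simp add: P_beta_def)
qed

lemma E_has_sum:
  assumes "\<beta> > 0" "\<bar>h\<bar> < \<beta>/2"
  shows "((\<lambda>k. P_beta \<beta> k * exp (h * real_of_int k)) has_sum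
     ((1 - rr \<beta>)^2 / ((1 - rr \<beta> * exp h) * (1 - rr \<beta> * exp (-h))))) UNIV"
proof -
  define x where "x = rr \<beta> * exp h"
  define y where "y = rr \<beta> * exp (-h)"
  define c where "c = c_beta \<beta>"
  define f where "f = (\<lambda>k. P_beta \<beta> k * exp (h * real_of_int k))"
  have x0: "0 < x" "x < 1" using assms rr_exp_lt1[of h \<beta>] by (auto simp: x_def rr_pos)
  have y0: "0 < y" "y < 1" using assms rr_exp_lt1[of "-h" \<beta>] by (auto simp: y_def rr_pos)
  have r1: "rr \<beta> < 1" using assms rr_lt1 by auto
  have c_eq: "c = (1 + rr \<beta>) / (1 - rr \<beta>)" by (simp add: c_def c_beta_def rr_def)
  have cpos: "c > 0" using c_eq r1 rr_pos[of \<beta>] by auto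
  have s1: "((\<lambda>n. x ^ n / c) has_sum (1/(1-x)/c)) UNIV"
  proof (rule sums_nonneg_imp_has_sum)
    have "(\<lambda>n. x ^ n) sums (1/(1-x))" using x0 by (intro geometric_sums) auto
    then show "(\<lambda>n. x ^ n / c) sums (1/(1-x)/c)" by (intro sums_divide) auto
  qed (use x0 cpos in auto)
  have s2: "((\<lambda>n. y ^ Suc n / c) has_sum (y/(1-y)/c)) UNIV"
  proof (rule sums_nonneg_imp_has_sum)
    have "(\<lambda>n. y * y ^ n) sums (y * (1/(1-y)))" using y0 by (intro sums_mult geometric_sums) auto
    then show "(\<lambda>n. y ^ Suc n / c) sums (y/(1-y)/c)" by (intro sums_divide) auto
  qed (use y0 cpos in auto)
  have A: "(f has_sum (1/(1-x)/c)) (int ` UNIV)"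
  proof -
    have e: "f (int n) = x^n/c" for n
      using P_beta_nonneg_ge[of "int n" \<beta> h] by (simp add: f_def x_def c_def)
    have "((f \<circ> int) has_sum (1/(1-x)/c)) UNIV"
      using s1 by (simp add: o_def e)
    then show ?thesis by (subst has_sum_reindex) auto
  qed
  have B: "(f has_sum (y/(1-y)/c)) ((\<lambda>n. - int n - 1) ` UNIV)"
  proof -
    have e: "f (- int n - 1) = y ^ Suc n/c" for n
      using P_beta_neg[of \<beta> n h] by (simp add: f_def y_def c_def)
    have "((f \<circ> (\<lambda>n. - int n - 1)) has_sum (y/(1-y)/c)) UNIV"
      using s2 by (simp add: o_def e)
    then show ?thesis by (subst has_sum_reindex) (auto simp: inj_on_def)
  qed
  have U: "int ` UNIV \<union> (\<lambda>n. - int n - 1) ` UNIV = (UNIV :: int set)"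
  proof -
    have "k \<in> int ` UNIV \<union> (\<lambda>n. - int n - 1) ` UNIV" for k :: int
    proof (cases "k \<ge> 0")
      case True then show ?thesis by (auto intro!: image_eqI[of _ _ "nat k"])
    next
      case False then show ?thesis by (auto intro!: image_eqI[of _ _ "nat (-k-1)"])
    qed
    then show ?thesis by auto
  qed
  have "(f has_sum (1/(1-x)/c + y/(1-y)/c)) UNIV"
  proof -
    have "range int \<inter> range (\<lambda>n. - int n - 1) = {}" by auto
    then show ?thesis using has_sum_Un_disjoint[OF A B] U by simp
  qed
  moreover have "1/(1-x)/c + y/(1-y)/c = (1 - rr \<beta>)^2 / ((1 - x) * (1 - y))"
  proof -
    have xy: "x * y = rr \<beta> ^ 2" by (simp add: x_def y_def power2_eq_square mult_exp_exp)
    have "1/(1-x)/c + y/(1-y)/c = (1 - x*y) / ((1-x)*(1-y)) / c"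
    proof -
      have "(1-x) \<noteq> 0" "(1-y) \<noteq> 0" "c \<noteq> 0" using x0 y0 cpos by auto
      then show ?thesis by (simp add: divide_simps) (simp add: algebra_simps)
    qed
    also have "\<dots> = (1 - rr \<beta>)^2 / ((1 - x) * (1 - y))"
    proof -
      have "(1-x) \<noteq> 0" "(1-y) \<noteq> 0" "1 + rr \<beta> \<noteq> 0" "1 - rr \<beta> \<noteq> 0" using x0 y0 r1 rr_pos[of \<beta>] by auto
      then show ?thesis unfolding xy c_eq by (simp add: divide_simps) (simp add: algebra_simps power2_eq_square)
    qed
    finally show ?thesis .
  qed
  ultimately show ?thesis by (simp add: f_def x_def y_def)
qed



definition Lf :: "real \<Rightarrow> real \<Rightarrow> real" where
  "Lf \<beta> u = 2 * ln (1 - rr \<beta>) - ln (1 - rr \<beta> * exp u) - ln (1 - rr \<beta> * exp (-u))"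

definition Ld :: "real \<Rightarrow> real \<Rightarrow> real" where
  "Ld \<beta> u = rr \<beta> * exp u / (1 - rr \<beta> * exp u) - rr \<beta> * exp (-u) / (1 - rr \<beta> * exp (-u))"

lemma LL_eq_Lf:
  assumes "\<beta> > 0" "\<bar>u\<bar> < \<beta>/2"
  shows "LL \<beta> u = Lf \<beta> u"
proof -
  have x: "0 < 1 - rr \<beta> * exp u" "0 < 1 - rr \<beta> * exp (-u)" "0 < 1 - rr \<beta>"
    using assms rr_exp_lt1[of u \<beta>] rr_exp_lt1[of "-u" \<beta>] rr_lt1[of \<beta>] by auto
  have "LL \<beta> u = ln ((1 - rr \<beta>)^2 / ((1 - rr \<beta> * exp u) * (1 - rr \<beta> * exp (-u))))"
    unfolding LL_def using infsumI[OF E_has_sum[OF assms]] by simp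
  also have "\<dots> = Lf \<beta> u" using x by (simp add: Lf_def ln_div ln_mult ln_realpow)
  finally show ?thesis .
qed

lemma Lf_deriv:
  assumes "\<bar>u\<bar> < \<beta>/2"
  shows "(Lf \<beta> has_real_derivative Ld \<beta> u) (at u)"
proof -
  have x: "0 < 1 - rr \<beta> * exp u" "0 < 1 - rr \<beta> * exp (-u)"
    using assms rr_exp_lt1[of u \<beta>] rr_exp_lt1[of "-u" \<beta>] by auto
  have d1: "((\<lambda>z. ln (1 - rr \<beta> * exp z)) has_real_derivative
      (1 / (1 - rr \<beta> * exp u)) * (- (rr \<beta> * exp u))) (at u)"
    by (rule DERIV_chain2[where f=ln and g="\<lambda>z. 1 - rr \<beta> * exp z", OF DERIV_ln_divide[OF x(1)]]) (auto intro!: derivative_eq_intros)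
  have d2: "((\<lambda>z. ln (1 - rr \<beta> * exp (-z))) has_real_derivative
      (1 / (1 - rr \<beta> * exp (-u))) * (rr \<beta> * exp (-u))) (at u)"
    by (rule DERIV_chain2[where f=ln and g="\<lambda>z. 1 - rr \<beta> * exp (-z)", OF DERIV_ln_divide[OF x(2)]]) (auto intro!: derivative_eq_intros)
  have "((\<lambda>u. 2 * ln (1 - rr \<beta>) - ln (1 - rr \<beta> * exp u) - ln (1 - rr \<beta> * exp (-u))) has_real_derivative
     (0 - (1 / (1 - rr \<beta> * exp u)) * (- (rr \<beta> * exp u)) - (1 / (1 - rr \<beta> * exp (-u))) * (rr \<beta> * exp (-u)))) (at u)"
    by (intro DERIV_diff d1 d2 DERIV_const)
  then show ?thesis unfolding Lf_def[abs_def] Ld_def by simp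
qed

lemma Lf_even: "Lf \<beta> (-u) = Lf \<beta> u" by (simp add: Lf_def)
lemma Ld_odd: "Ld \<beta> (-u) = - Ld \<beta> u" by (simp add: Ld_def)
lemma Lf_0: "Lf \<beta> 0 = 0" by (simp add: Lf_def)
lemma Ld_0: "Ld \<beta> 0 = 0" by (simp add: Ld_def)

lemma frac_mono: "0 < t1 \<Longrightarrow> t1 < t2 \<Longrightarrow> t2 < 1 \<Longrightarrow> t1 / (1 - t1) < t2 / (1 - (t2::real))"
  by (simp add: divide_simps) (simp add: algebra_simps)

lemma Ld_strict_mono:
  assumes "\<beta> > 0" "\<bar>u\<bar> < \<beta>/2" "\<bar>v\<bar> < \<beta>/2" "u < v"
  shows "Ld \<beta> u < Ld \<beta> v"
proof -
  have a: "rr \<beta> * exp u / (1 - rr \<beta> * exp u) < rr \<beta> * exp v / (1 - rr \<beta> * exp v)"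
    by (rule frac_mono) (use assms rr_exp_lt1[of v \<beta>] rr_pos[of \<beta>] in auto)
  have b: "rr \<beta> * exp (-v) / (1 - rr \<beta> * exp (-v)) < rr \<beta> * exp (-u) / (1 - rr \<beta> * exp (-u))"
    by (rule frac_mono) (use assms rr_exp_lt1[of "-u" \<beta>] rr_pos[of \<beta>] in auto)
  show ?thesis using a b by (simp add: Ld_def)
qed

lemma Ld_mono:
  assumes "\<beta> > 0" "\<bar>u\<bar> < \<beta>/2" "\<bar>v\<bar> < \<beta>/2" "u \<le> v"
  shows "Ld \<beta> u \<le> Ld \<beta> v"
  using Ld_strict_mono[OF assms(1-3)] assms(4) by (cases "u = v") auto

lemma Ld_abs_le:
  assumes "\<beta> > 0" "\<bar>u\<bar> \<le> m" "m < \<beta>/2"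
  shows "\<bar>Ld \<beta> u\<bar> \<le> Ld \<beta> m"
proof -
  have "Ld \<beta> u \<le> Ld \<beta> m" using assms by (intro Ld_mono) auto
  moreover have "Ld \<beta> (-m) \<le> Ld \<beta> u" using assms by (intro Ld_mono) auto
  ultimately show ?thesis using Ld_odd[of \<beta> m] by auto
qed

lemma Ld_cont: "continuous_on {u. \<bar>u\<bar> < \<beta>/2} (Ld \<beta>)"
proof -
  have "\<forall>u\<in>{u. \<bar>u\<bar> < \<beta>/2}. isCont (Ld \<beta>) u"
  proof
    fix u assume "u \<in> {u. \<bar>u\<bar> < \<beta>/2}"
    then have "u < \<beta>/2" "-u < \<beta>/2" by auto
    then have x: "1 - rr \<beta> * exp u \<noteq> 0" "1 - rr \<beta> * exp (-u) \<noteq> 0"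
      using rr_exp_lt1[of u \<beta>] rr_exp_lt1[of "-u" \<beta>] by auto
    show "isCont (Ld \<beta>) u" unfolding Ld_def[abs_def] by (intro continuous_intros x)
  qed
  then show ?thesis by (simp add: continuous_at_imp_continuous_on)
qed

lemma Lf_cont: "continuous_on {u. \<bar>u\<bar> < \<beta>/2} (Lf \<beta>)"
proof -
  have "\<forall>u\<in>{u. \<bar>u\<bar> < \<beta>/2}. isCont (Lf \<beta>) u"
    using Lf_deriv DERIV_isCont by blast
  then show ?thesis by (simp add: continuous_at_imp_continuous_on)
qed

lemma Lf_convex: assumes "\<beta> > 0" shows "convex_on {u. \<bar>u\<bar> < \<beta>/2} (Lf \<beta>)"
proof (rule convex_on_realI[where f'="Ld \<beta>"])
  have "{u. \<bar>u\<bar> < \<beta>/2} = {-\<beta>/2<..<\<beta>/2}" by auto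
  then show "connected {u. \<bar>u\<bar> < \<beta>/2}" by simp
qed (use Lf_deriv Ld_mono assms in auto)

lemma Lf_nonneg: assumes "\<beta> > 0" "\<bar>u\<bar> < \<beta>/2" shows "Lf \<beta> u \<ge> 0"
proof -
  have c: "convex_on {u. \<bar>u\<bar> < \<beta>/2} (Lf \<beta>)" by (rule Lf_convex[OF assms(1)])
  have "Lf \<beta> ((1 - 1/2) *\<^sub>R u + (1/2) *\<^sub>R (-u)) \<le> (1 - 1/2) * Lf \<beta> u + (1/2) * Lf \<beta> (-u)"
    by (rule convex_onD[OF c]) (use assms in auto)
  then show ?thesis by (simp add: Lf_even Lf_0)
qed

lemma Lf_scale: assumes "\<beta> > 0" "\<bar>u\<bar> < \<beta>/2" "0 \<le> t" "t \<le> 1"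
  shows "Lf \<beta> (t * u) \<le> t * Lf \<beta> u"
proof -
  have c: "convex_on {u. \<bar>u\<bar> < \<beta>/2} (Lf \<beta>)" by (rule Lf_convex[OF assms(1)])
  have "Lf \<beta> ((1-t) *\<^sub>R 0 + t *\<^sub>R u) \<le> (1-t) * Lf \<beta> 0 + t * Lf \<beta> u"
    by (rule convex_onD[OF c]) (use assms in auto)
  then show ?thesis by (simp add: Lf_0)
qed

lemma Lf_grows:
  assumes "\<beta> > 0" "u0 < \<beta>/2"
  shows "\<exists>u. u0 < u \<and> 0 < u \<and> u < \<beta>/2 \<and> Lf \<beta> u \<ge> M"
proof -
  define r where "r = rr \<beta>"
  have r: "0 < r" "r < 1" using assms rr_pos rr_lt1 by (auto simp: r_def)
  define v0 where "v0 = max u0 0"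
  have v0: "r * exp v0 < 1" using rr_exp_lt1[of v0 \<beta>] assms by (auto simp: r_def v0_def)
  define K where "K = max (M - 2 * ln (1 - r)) (- ln (1 - r * exp v0) + 1)"
  have eK: "exp (-K) < 1 - r * exp v0"
  proof -
    have "exp (-K) \<le> exp (ln (1 - r * exp v0) - 1)" unfolding K_def by simp
    also have "\<dots> < exp (ln (1 - r * exp v0))" by simp
    also have "\<dots> = 1 - r * exp v0" using v0 by simp
    finally show ?thesis .
  qed
  define u where "u = ln ((1 - exp (-K)) / r)"
  have pos: "0 < 1 - exp (-K)" using eK r v0 by (smt (verit) exp_gt_zero mult_pos_pos)
  have ru: "r * exp u = 1 - exp (-K)" unfolding u_def using pos r by simp
  have "r * exp v0 < r * exp u" using ru eK by simp
  then have "v0 < u" using r by simp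
  moreover have "u < \<beta>/2"
  proof -
    have "r * exp u < 1" using ru by simp
    then have "exp (u - \<beta>/2) < 1" by (simp add: r_def rr_def mult_exp_exp)
    then show ?thesis by simp
  qed
  moreover have "Lf \<beta> u \<ge> M"
  proof -
    have a: "ln (1 - r * exp (-u)) \<le> 0"
    proof -
      have "0 < r * exp (-u)" using r by simp
      moreover have "r * exp (-u) < 1" using rr_exp_lt1[of "-u" \<beta>] \<open>u < \<beta>/2\<close> \<open>v0 < u\<close> v0_def by (auto simp: r_def)
      ultimately show ?thesis by simp
    qed
    have "Lf \<beta> u = 2 * ln (1 - r) + K - ln (1 - r * exp (-u))"
      unfolding Lf_def r_def[symmetric] ru by simp
    then show ?thesis using a unfolding K_def by linarith
  qed
  ultimately show ?thesis unfolding v0_def by auto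
qed



definition Jf :: "real \<Rightarrow> real \<Rightarrow> real \<Rightarrow> real \<Rightarrow> real" where
  "Jf \<beta> p a s = integral {0..1} (\<lambda>x. Lf \<beta> (s * (x - p) + a))"

definition Jd :: "real \<Rightarrow> real \<Rightarrow> real \<Rightarrow> real \<Rightarrow> real" where
  "Jd \<beta> p a s = integral {0..1} (\<lambda>x. (x - p) * Ld \<beta> (s * (x - p) + a))"

definition Jok :: "real \<Rightarrow> real \<Rightarrow> real \<Rightarrow> real set \<Rightarrow> bool" where
  "Jok \<beta> p a U \<longleftrightarrow> (\<forall>s\<in>U. \<forall>x\<in>{0..1}. \<bar>s * (x - p) + a\<bar> < \<beta>/2)"

lemma Jf_integrand_cont:
  assumes "\<forall>x\<in>{0..1}. \<bar>s * (x - p) + a\<bar> < \<beta>/2"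
  shows "continuous_on {0..1} (\<lambda>x. Lf \<beta> (s * (x - p) + a))"
  by (rule continuous_on_compose2[OF Lf_cont]) (use assms in \<open>auto intro!: continuous_intros\<close>)

lemma Jd_integrand_cont2:
  assumes "Jok \<beta> p a U"
  shows "continuous_on (U \<times> {0..1}) (\<lambda>(s, x). (x - p) * Ld \<beta> (s * (x - p) + a))"
proof -
  have "continuous_on (U \<times> {0..1}) (\<lambda>z. Ld \<beta> (fst z * (snd z - p) + a))"
    by (rule continuous_on_compose2[OF Ld_cont]) (use assms in \<open>auto simp: Jok_def intro!: continuous_intros\<close>)
  then have "continuous_on (U \<times> {0..1}) (\<lambda>z. (snd z - p) * Ld \<beta> (fst z * (snd z - p) + a))"
    by (intro continuous_intros)
  then show ?thesis by (simp add: case_prod_beta)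
qed

lemma Jd_integrand_cont:
  assumes "\<forall>x\<in>{0..1}. \<bar>s * (x - p) + a\<bar> < \<beta>/2"
  shows "continuous_on {0..1} (\<lambda>x. (x - p) * Ld \<beta> (s * (x - p) + a))"
  by (intro continuous_intros continuous_on_compose2[OF Ld_cont]) (use assms in \<open>auto intro!: continuous_intros\<close>)

lemma J_deriv:
  assumes "open U" "convex U" "Jok \<beta> p a U" "s \<in> U"
  shows "(Jf \<beta> p a has_real_derivative Jd \<beta> p a s) (at s)"
proof -
  have "((\<lambda>s. integral (cbox 0 1) (\<lambda>x. Lf \<beta> (s * (x - p) + a))) has_field_derivative
      integral (cbox 0 1) (\<lambda>x. (x - p) * Ld \<beta> (s * (x - p) + a))) (at s within U)"
  proof (rule leibniz_rule_field_derivative[where fx="\<lambda>s x. (x - p) * Ld \<beta> (s * (x - p) + a)"])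
    fix s x :: real assume sx: "s \<in> U" "x \<in> cbox 0 1"
    have x01: "x \<in> {0..1}" using sx(2) by simp
    have d: "\<bar>s * (x - p) + a\<bar> < \<beta>/2" using assms(3) sx(1) x01 unfolding Jok_def by blast
    have D0: "((\<lambda>s. s * (x - p) + a) has_real_derivative (x - p)) (at s)"
      using DERIV_add[OF DERIV_cmult_right[OF DERIV_ident, of "x - p"] DERIV_const[of a]] by simp
    have "((\<lambda>s. Lf \<beta> (s * (x - p) + a)) has_real_derivative Ld \<beta> (s * (x - p) + a) * (x - p)) (at s)"
      by (rule DERIV_chain2[where f="Lf \<beta>" and g="\<lambda>s. s * (x - p) + a", OF Lf_deriv[OF d] D0])
    then show "((\<lambda>s. Lf \<beta> (s * (x - p) + a)) has_real_derivative (x - p) * Ld \<beta> (s * (x - p) + a)) (at s within U)"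
      by (subst mult.commute) (rule has_field_derivative_at_within)
  next
    fix s assume "s \<in> U"
    then have "\<forall>x\<in>{0..1}. \<bar>s * (x - p) + a\<bar> < \<beta>/2" using assms(3) unfolding Jok_def by blast
    from integrable_continuous_interval[OF Jf_integrand_cont[OF this]]
    show "(\<lambda>x. Lf \<beta> (s * (x - p) + a)) integrable_on cbox 0 1" by simp
  next
    show "continuous_on (U \<times> cbox 0 1) (\<lambda>(s, x). (x - p) * Ld \<beta> (s * (x - p) + a))"
      using Jd_integrand_cont2[OF assms(3)] by simp
  next
    show "s \<in> U" by (rule assms(4))
    show "convex U" by (rule assms(2))
  qed
  then have "(Jf \<beta> p a has_real_derivative Jd \<beta> p a s) (at s within U)"
    unfolding Jf_def[abs_def] Jd_def cbox_interval .
  from this[unfolded at_within_open[OF assms(4) assms(1)]] show ?thesis .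
qed

lemma Jd_cont:
  assumes "Jok \<beta> p a U"
  shows "continuous_on U (Jd \<beta> p a)"
  unfolding Jd_def[abs_def]
  using integral_continuous_on_param[of U 0 1 "\<lambda>s x. (x - p) * Ld \<beta> (s * (x - p) + a)"] Jd_integrand_cont2[OF assms]
  by simp

lemma integral_strict_except:
  fixes f g :: "real \<Rightarrow> real"
  assumes "continuous_on {0..1} f" "continuous_on {0..1} g"
    and "\<And>x. x \<in> {0..1} \<Longrightarrow> x \<noteq> p \<Longrightarrow> f x < g x"
  shows "integral {0..1} f < integral {0..1} g"
proof (cases "0 < p \<and> p < 1")
  case True
  have i1: "integral {0..p} f < integral {0..p} g"
    by (rule integral_less_real) (use assms True in \<open>auto intro: continuous_on_subset\<close>)
  have i2: "integral {p..1} f < integral {p..1} g"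
    by (rule integral_less_real) (use assms True in \<open>auto intro: continuous_on_subset\<close>)
  have "integral {0..1} f = integral {0..p} f + integral {p..1} f"
    using Henstock_Kurzweil_Integration.integral_combine[where a=0 and c=p and b=1 and f=f] True integrable_continuous_interval[OF assms(1)] by simp
  moreover have "integral {0..1} g = integral {0..p} g + integral {p..1} g"
    using Henstock_Kurzweil_Integration.integral_combine[where a=0 and c=p and b=1 and f=g] True integrable_continuous_interval[OF assms(2)] by simp
  ultimately show ?thesis using i1 i2 by simp
next
  case False
  show ?thesis by (rule integral_less_real) (use assms False in auto)
qed

lemma Jd_strict_mono:
  assumes "\<beta> > 0" "Jok \<beta> p a U" "s1 \<in> U" "s2 \<in> U" "s1 < s2"
  shows "Jd \<beta> p a s1 < Jd \<beta> p a s2"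
  unfolding Jd_def
proof (rule integral_strict_except[where p=p])
  show "continuous_on {0..1} (\<lambda>x. (x - p) * Ld \<beta> (s1 * (x - p) + a))"
    by (rule Jd_integrand_cont) (use assms in \<open>auto simp: Jok_def\<close>)
  show "continuous_on {0..1} (\<lambda>x. (x - p) * Ld \<beta> (s2 * (x - p) + a))"
    by (rule Jd_integrand_cont) (use assms in \<open>auto simp: Jok_def\<close>)
  fix x :: real assume x: "x \<in> {0..1}" "x \<noteq> p"
  have d1: "\<bar>s1 * (x - p) + a\<bar> < \<beta>/2" and d2: "\<bar>s2 * (x - p) + a\<bar> < \<beta>/2"
    using assms x by (auto simp: Jok_def)
  show "(x - p) * Ld \<beta> (s1 * (x - p) + a) < (x - p) * Ld \<beta> (s2 * (x - p) + a)"
  proof (cases "x > p")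
    case True
    then have "s1 * (x - p) + a < s2 * (x - p) + a" using assms(5) by simp
    then have "Ld \<beta> (s1 * (x - p) + a) < Ld \<beta> (s2 * (x - p) + a)" by (rule Ld_strict_mono[OF assms(1) d1 d2])
    then show ?thesis using True by simp
  next
    case False
    then have xp: "x < p" using x by simp
    then have "s2 * (x - p) + a < s1 * (x - p) + a" using assms(5) by (simp add: mult_strict_right_mono_neg)
    then have "Ld \<beta> (s2 * (x - p) + a) < Ld \<beta> (s1 * (x - p) + a)" by (rule Ld_strict_mono[OF assms(1) d2 d1])
    then show ?thesis using xp by (simp add: mult_strict_left_mono_neg)
  qed
qed

lemma J_ibp:
  assumes "\<forall>x\<in>{0..1}. \<bar>s * (x - p) + a\<bar> < \<beta>/2"
  shows "s * Jd \<beta> p a s = (1 - p) * Lf \<beta> (s * (1 - p) + a) + p * Lf \<beta> (a - s * p) - Jf \<beta> p a s"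
proof -
  define FF where "FF = (\<lambda>x. (x - p) * Lf \<beta> (s * (x - p) + a))"
  define FD where "FD = (\<lambda>x. Lf \<beta> (s * (x - p) + a) + s * ((x - p) * Ld \<beta> (s * (x - p) + a)))"
  have "(FD has_integral (FF 1 - FF 0)) {0..1}"
  proof (rule fundamental_theorem_of_calculus)
    fix x :: real assume x: "x \<in> {0..1}"
    then have d: "\<bar>s * (x - p) + a\<bar> < \<beta>/2" using assms by auto
    have D1: "((\<lambda>x. Lf \<beta> (s * (x - p) + a)) has_real_derivative Ld \<beta> (s * (x - p) + a) * s) (at x)"
      by (rule DERIV_chain2[where f="Lf \<beta>" and g="\<lambda>x. s * (x - p) + a", OF Lf_deriv[OF d]])
         (auto intro!: derivative_eq_intros)
    have "(FF has_real_derivative Lf \<beta> (s * (x - p) + a) + (x - p) * (Ld \<beta> (s * (x - p) + a) * s)) (at x)"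
    proof -
      have D2: "((\<lambda>x. x - p) has_real_derivative 1) (at x)" by (auto intro!: derivative_eq_intros)
      from DERIV_mult[OF D2 D1] show ?thesis unfolding FF_def by (simp add: algebra_simps)
    qed
    then have "(FF has_real_derivative FD x) (at x)" unfolding FD_def by (simp add: algebra_simps)
    then show "(FF has_vector_derivative FD x) (at x within {0..1})"
      by (simp add: has_real_derivative_iff_has_vector_derivative has_vector_derivative_at_within)
  qed simp
  moreover have "(FD has_integral (Jf \<beta> p a s + s * Jd \<beta> p a s)) {0..1}"
    unfolding FD_def Jf_def Jd_def
    by (intro has_integral_add has_integral_mult_right integrable_integral integrable_continuous_interval
        Jf_integrand_cont Jd_integrand_cont assms)
  ultimately have "FF 1 - FF 0 = Jf \<beta> p a s + s * Jd \<beta> p a s" using has_integral_unique by blast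
  then show ?thesis unfolding FF_def by (simp add: algebra_simps)
qed



lemma JokG: "\<beta> > 0 \<Longrightarrow> Jok \<beta> (1/2) 0 {-\<beta><..<\<beta>}"
  unfolding Jok_def
proof (intro ballI)
  fix s x :: real assume "s \<in> {-\<beta><..<\<beta>}" "x \<in> {0..1}"
  then have "\<bar>s\<bar> < \<beta>" "\<bar>x - 1/2\<bar> \<le> 1/2" by (auto simp: abs_if)
  then have "\<bar>s\<bar> * \<bar>x - 1/2\<bar> \<le> \<bar>s\<bar> * (1/2)" by (intro mult_left_mono) auto
  then show "\<bar>s * (x - 1/2) + 0\<bar> < \<beta>/2" using \<open>\<bar>s\<bar> < \<beta>\<close> by (simp add: abs_mult)
qed

lemma JokH: "0 < \<delta> \<Longrightarrow> \<delta> < \<beta> \<Longrightarrow> Jok \<beta> 0 (\<delta> - \<beta>/2) {-\<delta><..<\<beta> - \<delta>}"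
  unfolding Jok_def
proof (intro ballI)
  fix s x :: real assume a: "0 < \<delta>" "\<delta> < \<beta>" "s \<in> {-\<delta><..<\<beta> - \<delta>}" "x \<in> {0..1}"
  have x: "0 \<le> x" "x \<le> 1" using a(4) by auto
  have "s * x < \<beta> - \<delta>"
  proof (cases "s \<le> 0")
    case True then have "s * x \<le> 0" using x by (simp add: mult_nonpos_nonneg)
    then show ?thesis using a by linarith
  next
    case False then have "s * x \<le> s" using x by (simp add: mult_left_le)
    then show ?thesis using a by simp
  qed
  moreover have "-\<delta> < s * x"
  proof (cases "s \<ge> 0")
    case True then have "0 \<le> s * x" using x by simp
    then show ?thesis using a by linarith
  next
    case False then have "(-s) * x \<le> -s" using x by (simp add: mult_left_le)
    then show ?thesis using a by simp
  qed
  ultimately have "s * x < \<beta> - \<delta>" "-\<delta> < s * x" .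
  then show "\<bar>s * (x - 0) + (\<delta> - \<beta>/2)\<bar> < \<beta>/2" using a by (simp add: abs_if)
qed

lemma GG_eq: assumes "\<beta> > 0" "\<bar>h\<bar> < \<beta>" shows "GG \<beta> h = Jf \<beta> (1/2) 0 h"
  unfolding GG_def Jf_def
proof (rule integral_cong)
  fix x :: real assume "x \<in> {0..1}"
  moreover have "h \<in> {-\<beta><..<\<beta>}" using assms(2) by auto
  ultimately have "\<bar>h * (x - 1/2) + 0\<bar> < \<beta>/2" using JokG[OF assms(1)] unfolding Jok_def by blast
  then show "LL \<beta> (h * (x - 1/2)) = Lf \<beta> (h * (x - 1/2) + 0)" using LL_eq_Lf[OF assms(1)] by simp
qed

lemma HH_eq: assumes "0 < \<delta>" "\<delta> < \<beta>" "-\<delta> < s" "s < \<beta> - \<delta>"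
  shows "HH \<beta> \<delta> s = Jf \<beta> 0 (\<delta> - \<beta>/2) s"
  unfolding HH_def Jf_def
proof (rule integral_cong)
  fix x :: real assume "x \<in> {0..1}"
  moreover have "s \<in> {-\<delta><..<\<beta> - \<delta>}" using assms(3,4) by auto
  ultimately have "\<bar>s * (x - 0) + (\<delta> - \<beta>/2)\<bar> < \<beta>/2" using JokH[OF assms(1,2)] unfolding Jok_def by blast
  moreover have "\<beta> > 0" using assms by simp
  ultimately show "LL \<beta> (s * x + \<delta> - \<beta>/2) = Lf \<beta> (s * (x - 0) + (\<delta> - \<beta>/2))" using LL_eq_Lf by (simp add: algebra_simps)
qed

lemma deriv_GG: assumes "\<beta> > 0" "\<bar>h\<bar> < \<beta>" shows "deriv (GG \<beta>) h = Jd \<beta> (1/2) 0 h"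
proof -
  have hU: "h \<in> {-\<beta><..<\<beta>}" using assms by auto
  have "(Jf \<beta> (1/2) 0 has_real_derivative Jd \<beta> (1/2) 0 h) (at h)"
    by (rule J_deriv[OF _ _ JokG[OF assms(1)] hU]) auto
  then have "(GG \<beta> has_real_derivative Jd \<beta> (1/2) 0 h) (at h)"
    by (rule has_field_derivative_transform_within_open[where S="{-\<beta><..<\<beta>}"])
       (use hU GG_eq[OF assms(1)] in auto)
  then show ?thesis by (rule DERIV_imp_deriv)
qed

lemma deriv_HH: assumes "0 < \<delta>" "\<delta> < \<beta>" "-\<delta> < s" "s < \<beta> - \<delta>"
  shows "deriv (HH \<beta> \<delta>) s = Jd \<beta> 0 (\<delta> - \<beta>/2) s"
proof -
  have hU: "s \<in> {-\<delta><..<\<beta> - \<delta>}" using assms by auto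
  have "(Jf \<beta> 0 (\<delta> - \<beta>/2) has_real_derivative Jd \<beta> 0 (\<delta> - \<beta>/2) s) (at s)"
    by (rule J_deriv[OF _ _ JokH[OF assms(1,2)] hU]) auto
  then have "(HH \<beta> \<delta> has_real_derivative Jd \<beta> 0 (\<delta> - \<beta>/2) s) (at s)"
    by (rule has_field_derivative_transform_within_open[where S="{-\<delta><..<\<beta> - \<delta>}"])
       (use hU HH_eq[OF assms(1,2)] in auto)
  then show ?thesis by (rule DERIV_imp_deriv)
qed

lemma Gd_0: "Jd \<beta> (1/2) 0 0 = 0"
  by (simp add: Jd_def Ld_0)

lemma integral_poly_aux:
  "integral {0..1} (\<lambda>x::real. ((2*x - 1)^2 + 1) / 2) = 2/3"
proof -
  have "((\<lambda>x::real. ((2*x - 1)^2 + 1) / 2) has_integral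
        (((2*1-1)^3/12 + 1/2) - ((2*0-1)^3/12 + 0/2))) {0..1::real}"
  proof (rule fundamental_theorem_of_calculus)
    fix x :: real
    have "((\<lambda>x::real. (2*x-1)^3/12 + x/2) has_real_derivative ((2*x - 1)^2 + 1) / 2) (at x)"
      by (rule derivative_eq_intros refl | simp add: power2_eq_square field_simps)+
    then show "((\<lambda>x::real. (2*x-1)^3/12 + x/2) has_vector_derivative ((2*x - 1)^2 + 1) / 2) (at x within {0..1})"
      by (simp add: has_real_derivative_iff_has_vector_derivative has_vector_derivative_at_within)
  qed simp
  then have "((\<lambda>x::real. ((2*x - 1)^2 + 1) / 2) has_integral 2/3) {0..1::real}" by simp
  then show ?thesis by (rule integral_unique)
qed

lemma integral_lin_aux:
  "integral {0..1} (\<lambda>x::real. (1 - x) * c1 + x * c2) = (c1 + c2) / 2"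
proof -
  have "((\<lambda>x::real. (1 - x) * c1 + x * c2) has_integral
        (((1 - 1^2/2) * c1 + 1^2/2 * c2) - ((0 - 0^2/2) * c1 + 0^2/2 * c2))) {0..1::real}"
  proof (rule fundamental_theorem_of_calculus)
    fix x :: real
    have "((\<lambda>x::real. (x - x^2/2) * c1 + x^2/2 * c2) has_real_derivative (1 - x) * c1 + x * c2) (at x)"
      by (auto intro!: derivative_eq_intros simp: algebra_simps)
    then show "((\<lambda>x::real. (x - x^2/2) * c1 + x^2/2 * c2) has_vector_derivative (1 - x) * c1 + x * c2) (at x within {0..1})"
      by (simp add: has_real_derivative_iff_has_vector_derivative has_vector_derivative_at_within)
  qed simp
  then show ?thesis by (simp add: integral_unique)
qed

lemma Gf_upper:
  assumes "\<beta> > 0" "0 \<le> h" "h < \<beta>"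
  shows "Jf \<beta> (1/2) 0 h \<le> 2/3 * Lf \<beta> (h/2)"
proof -
  have dom: "\<bar>h/2\<bar> < \<beta>/2" using assms by auto
  have L0: "Lf \<beta> (h/2) \<ge> 0" by (rule Lf_nonneg[OF assms(1) dom])
  have "Jf \<beta> (1/2) 0 h \<le> integral {0..1} (\<lambda>x. ((2*x - 1)^2 + 1) / 2 * Lf \<beta> (h/2))"
    unfolding Jf_def
  proof (rule integral_le)
    show "(\<lambda>x. Lf \<beta> (h * (x - 1/2) + 0)) integrable_on {0..1}"
      by (rule integrable_continuous_interval, rule Jf_integrand_cont)
         (use JokG[OF assms(1)] assms in \<open>auto simp: Jok_def\<close>)
    show "(\<lambda>x. ((2*x - 1)^2 + 1) / 2 * Lf \<beta> (h/2)) integrable_on {0..1}"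
      by (intro integrable_continuous_interval continuous_intros) auto
  next
    fix x :: real assume x: "x \<in> {0..1}"
    define t where "t = \<bar>2*x - 1\<bar>"
    have t: "0 \<le> t" "t \<le> 1" using x by (auto simp: t_def)
    have "Lf \<beta> (h * (x - 1/2) + 0) = Lf \<beta> (t * (h/2))"
    proof (cases "2*x - 1 \<ge> 0")
      case True then show ?thesis by (simp add: t_def algebra_simps)
    next
      case False
      then have "h * (x - 1/2) = - (t * (h/2))" by (simp add: t_def algebra_simps)
      then show ?thesis by (simp add: Lf_even)
    qed
    also have "\<dots> \<le> t * Lf \<beta> (h/2)" by (rule Lf_scale[OF assms(1) dom t])
    also have "\<dots> \<le> ((2*x - 1)^2 + 1) / 2 * Lf \<beta> (h/2)"
    proof (rule mult_right_mono[OF _ L0])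
      have "t^2 = (2*x-1)^2" by (simp add: t_def)
      moreover have "0 \<le> (t - 1)^2" by simp
      ultimately show "t \<le> ((2*x - 1)^2 + 1) / 2" by (simp add: power2_eq_square algebra_simps)
    qed
    finally show "Lf \<beta> (h * (x - 1/2) + 0) \<le> ((2*x - 1)^2 + 1) / 2 * Lf \<beta> (h/2)" .
  qed
  also have "\<dots> = 2/3 * Lf \<beta> (h/2)"
    using integral_poly_aux integral_mult_left[where f="\<lambda>x::real. ((2*x - 1)^2 + 1) / 2" and S="{0..1}" and c="Lf \<beta> (h/2)"]
    by simp
  finally show ?thesis .
qed



lemma JokG_pt: fixes \<beta> h :: real shows "\<beta> > 0 \<Longrightarrow> \<bar>h\<bar> < \<beta> \<Longrightarrow> \<forall>x\<in>{0..1}. \<bar>h * (x - 1/2) + 0\<bar> < \<beta>/2"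
proof -
  assume a: "\<beta> > 0" "\<bar>h\<bar> < \<beta>"
  then have "h \<in> {-\<beta><..<\<beta>}" by auto
  then show ?thesis using JokG[OF a(1)] unfolding Jok_def by blast
qed

lemma JokH_pt: fixes \<beta> \<delta> s :: real shows "0 < \<delta> \<Longrightarrow> \<delta> < \<beta> \<Longrightarrow> -\<delta> < s \<Longrightarrow> s < \<beta> - \<delta> \<Longrightarrow>
   \<forall>x\<in>{0..1}. \<bar>s * (x - 0) + (\<delta> - \<beta>/2)\<bar> < \<beta>/2"
proof -
  assume a: "0 < \<delta>" "\<delta> < \<beta>" "-\<delta> < s" "s < \<beta> - \<delta>"
  then have "s \<in> {-\<delta><..<\<beta> - \<delta>}" by auto
  then show ?thesis using JokH[OF a(1,2)] unfolding Jok_def by blast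
qed

lemma Gd_lower:
  assumes "\<beta> > 0" "0 < h" "h < \<beta>"
  shows "Lf \<beta> (h/2) / 3 \<le> h * Jd \<beta> (1/2) 0 h"
proof -
  have dom: "\<forall>x\<in>{0..1}. \<bar>h * (x - 1/2) + 0\<bar> < \<beta>/2" using JokG_pt assms by simp
  have "h * Jd \<beta> (1/2) 0 h = (1 - 1/2) * Lf \<beta> (h * (1 - 1/2) + 0) + 1/2 * Lf \<beta> (0 - h * (1/2)) - Jf \<beta> (1/2) 0 h"
    by (rule J_ibp[OF dom])
  also have "\<dots> = Lf \<beta> (h/2) - Jf \<beta> (1/2) 0 h"
    using Lf_even[of \<beta> "h/2"] by simp
  finally show ?thesis using Gf_upper[of \<beta> h] assms by simp
qed

lemma Hf_upper:
  assumes "0 < \<delta>" "\<delta> < \<beta>" "-\<delta> < s" "s < \<beta> - \<delta>"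
  shows "Jf \<beta> 0 (\<delta> - \<beta>/2) s \<le> (Lf \<beta> (\<delta> - \<beta>/2) + Lf \<beta> (s + (\<delta> - \<beta>/2))) / 2"
proof -
  define a where "a = \<delta> - \<beta>/2"
  have b: "\<beta> > 0" using assms by simp
  have da: "\<bar>a\<bar> < \<beta>/2" using assms by (simp add: a_def abs_if)
  have dsa: "\<bar>s + a\<bar> < \<beta>/2" using assms by (simp add: a_def abs_if)
  have c: "convex_on {u. \<bar>u\<bar> < \<beta>/2} (Lf \<beta>)" by (rule Lf_convex[OF b])
  have "Jf \<beta> 0 a s \<le> integral {0..1} (\<lambda>x. (1 - x) * Lf \<beta> a + x * Lf \<beta> (s + a))"
    unfolding Jf_def
  proof (rule integral_le)
    show "(\<lambda>x. Lf \<beta> (s * (x - 0) + a)) integrable_on {0..1}"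
      by (rule integrable_continuous_interval, rule Jf_integrand_cont)
         (use JokH_pt[OF assms] in \<open>simp add: a_def\<close>)
    show "(\<lambda>x. (1 - x) * Lf \<beta> a + x * Lf \<beta> (s + a)) integrable_on {0..1}"
      by (intro integrable_continuous_interval continuous_intros)
  next
    fix x :: real assume x: "x \<in> {0..1}"
    have "Lf \<beta> ((1 - x) *\<^sub>R a + x *\<^sub>R (s + a)) \<le> (1 - x) * Lf \<beta> a + x * Lf \<beta> (s + a)"
      by (rule convex_onD[OF c]) (use x da dsa in auto)
    moreover have "(1 - x) *\<^sub>R a + x *\<^sub>R (s + a) = s * (x - 0) + a" by (simp add: algebra_simps)
    ultimately show "Lf \<beta> (s * (x - 0) + a) \<le> (1 - x) * Lf \<beta> a + x * Lf \<beta> (s + a)" by simp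
  qed
  also have "\<dots> = (Lf \<beta> a + Lf \<beta> (s + a)) / 2" by (rule integral_lin_aux)
  finally show ?thesis unfolding a_def .
qed

lemma Hd_lower:
  assumes "0 < \<delta>" "\<delta> < \<beta>" "0 < s" "s < \<beta> - \<delta>"
  shows "(Lf \<beta> (s + (\<delta> - \<beta>/2)) - Lf \<beta> (\<delta> - \<beta>/2)) / 2 \<le> s * Jd \<beta> 0 (\<delta> - \<beta>/2) s"
proof -
  have s0: "-\<delta> < s" using assms by simp
  have "s * Jd \<beta> 0 (\<delta> - \<beta>/2) s = (1 - 0) * Lf \<beta> (s * (1 - 0) + (\<delta> - \<beta>/2)) + 0 * Lf \<beta> ((\<delta> - \<beta>/2) - s * 0) - Jf \<beta> 0 (\<delta> - \<beta>/2) s"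
    by (rule J_ibp[OF JokH_pt[OF assms(1,2) s0 assms(4)]])
  then have "s * Jd \<beta> 0 (\<delta> - \<beta>/2) s = Lf \<beta> (s + (\<delta> - \<beta>/2)) - Jf \<beta> 0 (\<delta> - \<beta>/2) s" by simp
  then show ?thesis using Hf_upper[OF assms(1,2) s0 assms(4)] by simp
qed

lemma Ld_int_zero:
  assumes "\<beta> > 0" "\<bar>s\<bar> < \<beta>"
  shows "integral {0..1} (\<lambda>x. Ld \<beta> (s * (x - 1/2))) = 0"
proof (cases "s = 0")
  case True then show ?thesis by (simp add: Ld_0)
next
  case False
  define FF where "FF = (\<lambda>x. Lf \<beta> (s * (x - 1/2)) / s)"
  have "((\<lambda>x. Ld \<beta> (s * (x - 1/2))) has_integral (FF 1 - FF 0)) {0..1}"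
  proof (rule fundamental_theorem_of_calculus)
    fix x :: real assume x: "x \<in> {0..1}"
    have d: "\<bar>s * (x - 1/2)\<bar> < \<beta>/2" using JokG_pt[OF assms] x by auto
    have D0: "((\<lambda>x. s * (x - 1/2)) has_real_derivative s) (at x)"
      by (rule derivative_eq_intros refl | simp)+
    have "((\<lambda>x. Lf \<beta> (s * (x - 1/2))) has_real_derivative Ld \<beta> (s * (x - 1/2)) * s) (at x)"
      by (rule DERIV_chain2[where f="Lf \<beta>" and g="\<lambda>x. s * (x - 1/2)", OF Lf_deriv[OF d] D0])
    then have "(FF has_real_derivative Ld \<beta> (s * (x - 1/2)) * s / s) (at x)"
      unfolding FF_def by (rule DERIV_cdivide)
    then have "(FF has_real_derivative Ld \<beta> (s * (x - 1/2))) (at x)" using False by simp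
    then show "(FF has_vector_derivative Ld \<beta> (s * (x - 1/2))) (at x within {0..1})"
      by (simp add: has_real_derivative_iff_has_vector_derivative has_vector_derivative_at_within)
  qed simp
  moreover have "FF 1 - FF 0 = 0"
    using Lf_even[of \<beta> "s/2"] by (simp add: FF_def algebra_simps)
  ultimately show ?thesis by (simp add: integral_unique)
qed

lemma HG_rel:
  assumes "0 < \<delta>" "\<delta> < \<beta>"
  shows "Jd \<beta> 0 (\<delta> - \<beta>/2) (\<beta> - 2*\<delta>) = Jd \<beta> (1/2) 0 (\<beta> - 2*\<delta>)"
proof -
  define s where "s = \<beta> - 2*\<delta>"
  have b: "\<beta> > 0" using assms by simp
  have sb: "\<bar>s\<bar> < \<beta>" using assms by (simp add: s_def abs_if)
  have dom: "\<forall>x\<in>{0..1}. \<bar>s * (x - 1/2) + 0\<bar> < \<beta>/2" using JokG_pt[OF b sb] .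
  have eq: "s * (x - 0) + (\<delta> - \<beta>/2) = s * (x - 1/2)" for x by (simp add: s_def algebra_simps)
  have "Jd \<beta> 0 (\<delta> - \<beta>/2) s = integral {0..1} (\<lambda>x. (x - 1/2) * Ld \<beta> (s * (x - 1/2)) + 1/2 * Ld \<beta> (s * (x - 1/2)))"
    unfolding Jd_def eq by (rule integral_cong) (simp add: algebra_simps)
  also have "\<dots> = integral {0..1} (\<lambda>x. (x - 1/2) * Ld \<beta> (s * (x - 1/2))) + integral {0..1} (\<lambda>x. 1/2 * Ld \<beta> (s * (x - 1/2)))"
  proof (rule integral_add)
    show "(\<lambda>x. (x - 1/2) * Ld \<beta> (s * (x - 1/2))) integrable_on {0..1}"
      using integrable_continuous_interval[OF Jd_integrand_cont[OF dom]] by simp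
    have "continuous_on {0..1} (\<lambda>x. Ld \<beta> (s * (x - 1/2) + 0))"
      by (rule continuous_on_compose2[OF Ld_cont]) (use dom in \<open>auto intro!: continuous_intros\<close>)
    then show "(\<lambda>x. 1/2 * Ld \<beta> (s * (x - 1/2))) integrable_on {0..1}"
      by (intro integrable_continuous_interval continuous_intros) simp
  qed
  also have "\<dots> = Jd \<beta> (1/2) 0 s"
    using Ld_int_zero[OF b sb] by (simp add: Jd_def)
  finally show ?thesis unfolding s_def .
qed



lemma JG_strict:
  assumes "\<beta> > 0" "\<bar>h1\<bar> < \<beta>" "\<bar>h2\<bar> < \<beta>" "h1 < h2"
  shows "Jd \<beta> (1/2) 0 h1 < Jd \<beta> (1/2) 0 h2"
  by (rule Jd_strict_mono[OF assms(1) JokG[OF assms(1)]]) (use assms in auto)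

lemma JG_cont: "\<beta> > 0 \<Longrightarrow> continuous_on {-\<beta><..<\<beta>} (Jd \<beta> (1/2) 0)"
  by (rule Jd_cont[OF JokG])

lemma htilde_props:
  assumes "\<beta> > 0" "q > 0"
  shows "0 < h_tilde \<beta> q \<and> h_tilde \<beta> q < \<beta> \<and> Jd \<beta> (1/2) 0 (h_tilde \<beta> q) = q"
proof -
  define JG where "JG = Jd \<beta> (1/2) 0"
  obtain u where u: "0 < u" "u < \<beta>/2" "Lf \<beta> u \<ge> 3 * \<beta> * q"
    using Lf_grows[OF assms(1), of 0 "3 * \<beta> * q"] assms by auto
  define h2 where "h2 = 2 * u"
  have h2: "0 < h2" "h2 < \<beta>" using u by (auto simp: h2_def)
  have "Lf \<beta> (h2/2) / 3 \<le> h2 * JG h2" unfolding JG_def by (rule Gd_lower[OF assms(1) h2])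
  then have "\<beta> * q \<le> h2 * JG h2" using u by (simp add: h2_def)
  moreover have "h2 * q < \<beta> * q" using h2 assms by simp
  ultimately have "h2 * q < h2 * JG h2" by linarith
  then have qJ: "q < JG h2" using h2 by simp
  have J0: "JG 0 = 0" by (simp add: JG_def Gd_0)
  have sub: "{0..h2} \<subseteq> {-\<beta><..<\<beta>}" using h2 assms by auto
  have cont: "continuous_on {0..h2} JG"
    using continuous_on_subset[OF JG_cont[OF assms(1)] sub] unfolding JG_def .
  obtain h where h: "0 \<le> h" "h \<le> h2" "JG h = q"
    using IVT'[of JG 0 q h2, OF _ _ _ cont] J0 qJ assms h2 by auto
  have hpos: "0 < h" using h J0 assms by (cases "h = 0") auto
  have hb: "h < \<beta>" using h h2 by simp
  have "h_tilde \<beta> q = h"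
    unfolding h_tilde_def
  proof (rule the_equality)
    show "0 \<le> h \<and> h < \<beta> \<and> deriv (GG \<beta>) h = q"
      using h hb deriv_GG[OF assms(1), of h] by (simp add: JG_def)
  next
    fix h' assume h': "0 \<le> h' \<and> h' < \<beta> \<and> deriv (GG \<beta>) h' = q"
    then have "JG h' = q" using deriv_GG[OF assms(1), of h'] by (simp add: JG_def)
    show "h' = h"
    proof (rule ccontr)
      assume "h' \<noteq> h"
      then consider "h' < h" | "h < h'" by linarith
      then show False
      proof cases
        case 1
        have "JG h' < JG h" unfolding JG_def by (rule JG_strict) (use 1 h' hb hpos assms in auto)
        then show False using \<open>JG h' = q\<close> h by simp
      next
        case 2
        have "JG h < JG h'" unfolding JG_def by (rule JG_strict) (use 2 h' hb hpos assms in auto)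
        then show False using \<open>JG h' = q\<close> h by simp
      qed
    qed
  qed
  then show ?thesis using hpos hb h unfolding JG_def by simp
qed

lemma htilde_mono:
  assumes "\<beta> > 0" "0 < q" "q \<le> q2"
  shows "h_tilde \<beta> q \<le> h_tilde \<beta> q2"
proof (rule ccontr)
  assume "\<not> ?thesis"
  then have lt: "h_tilde \<beta> q2 < h_tilde \<beta> q" by simp
  have p1: "0 < h_tilde \<beta> q" "h_tilde \<beta> q < \<beta>" "Jd \<beta> (1/2) 0 (h_tilde \<beta> q) = q" using htilde_props[OF assms(1,2)] by auto
  have p2: "0 < h_tilde \<beta> q2" "h_tilde \<beta> q2 < \<beta>" "Jd \<beta> (1/2) 0 (h_tilde \<beta> q2) = q2" using htilde_props[OF assms(1)] assms by auto
  have "Jd \<beta> (1/2) 0 (h_tilde \<beta> q2) < Jd \<beta> (1/2) 0 (h_tilde \<beta> q)"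
    by (rule JG_strict) (use assms p1 p2 lt in auto)
  then show False using p1 p2 assms by simp
qed

lemma JH_strict:
  assumes "0 < \<delta>" "\<delta> < \<beta>" "-\<delta> < s1" "s2 < \<beta> - \<delta>" "s1 < s2"
  shows "Jd \<beta> 0 (\<delta> - \<beta>/2) s1 < Jd \<beta> 0 (\<delta> - \<beta>/2) s2"
  by (rule Jd_strict_mono[OF _ JokH[OF assms(1,2)]]) (use assms in auto)

lemma sdelta_props:
  assumes "0 < \<delta>" "\<delta> < \<beta>" "q > 0" "\<beta>/2 - h_tilde \<beta> q / 2 < \<delta>"
  shows "\<beta> - 2*\<delta> < s_delta \<beta> \<delta> q \<and> s_delta \<beta> \<delta> q < \<beta> - \<delta> \<and> Jd \<beta> 0 (\<delta> - \<beta>/2) (s_delta \<beta> \<delta> q) = q"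
proof -
  define a where "a = \<delta> - \<beta>/2"
  define JH where "JH = Jd \<beta> 0 a"
  define s1 where "s1 = \<beta> - 2*\<delta>"
  have b: "\<beta> > 0" using assms by simp
  have ht: "0 < h_tilde \<beta> q" "h_tilde \<beta> q < \<beta>" "Jd \<beta> (1/2) 0 (h_tilde \<beta> q) = q"
    using htilde_props[OF b assms(3)] by auto
  have s1h: "s1 < h_tilde \<beta> q" using assms(4) by (simp add: s1_def)
  have "JH s1 = Jd \<beta> (1/2) 0 s1" unfolding JH_def a_def s1_def by (rule HG_rel[OF assms(1,2)])
  also have "\<dots> < Jd \<beta> (1/2) 0 (h_tilde \<beta> q)"
    by (rule JG_strict[OF b]) (use assms ht s1h in \<open>auto simp: s1_def\<close>)
  finally have Js1: "JH s1 < q" using ht by simp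
  have m: "max a (\<beta>/2 - \<delta>) < \<beta>/2" using assms(1,2) by (simp add: a_def max_def)
  obtain u where u: "max a (\<beta>/2 - \<delta>) < u" "u < \<beta>/2" "Lf \<beta> u \<ge> Lf \<beta> a + 2 * \<beta> * q"
    using Lf_grows[OF b m, of "Lf \<beta> a + 2 * \<beta> * q"] by auto
  define s2 where "s2 = u - a"
  have s2: "0 < s2" "s1 < s2" "s2 < \<beta> - \<delta>" using u by (auto simp: s2_def a_def s1_def)
  have "(Lf \<beta> (s2 + a) - Lf \<beta> a) / 2 \<le> s2 * JH s2"
    unfolding JH_def a_def by (rule Hd_lower[OF assms(1,2) s2(1,3)])
  then have "\<beta> * q \<le> s2 * JH s2" using u by (simp add: s2_def)
  moreover have "s2 * q < \<beta> * q" using s2 assms by simp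
  ultimately have "s2 * q < s2 * JH s2" by linarith
  then have qJ: "q < JH s2" using s2 by simp
  have s1d: "-\<delta> < s1" using assms by (simp add: s1_def)
  have sub: "{s1..s2} \<subseteq> {-\<delta><..<\<beta> - \<delta>}" using s1d s2 by auto
  have cont: "continuous_on {s1..s2} JH"
    using continuous_on_subset[OF Jd_cont[OF JokH[OF assms(1,2)]] sub] unfolding JH_def a_def .
  obtain s where s: "s1 \<le> s" "s \<le> s2" "JH s = q"
    using IVT'[of JH s1 q s2, OF _ _ _ cont] Js1 qJ s2 by auto
  have ss1: "s1 < s" using s Js1 by (cases "s = s1") auto
  have sb: "s < \<beta> - \<delta>" "-\<delta> < s" using s s2 ss1 s1d by auto
  have "s_delta \<beta> \<delta> q = s"
    unfolding s_delta_def
  proof (rule the_equality)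
    show "- \<delta> < s \<and> s < \<beta> - \<delta> \<and> deriv (HH \<beta> \<delta>) s = q"
      using sb s deriv_HH[OF assms(1,2) sb(2) sb(1)] by (simp add: JH_def a_def)
  next
    fix s' assume s': "- \<delta> < s' \<and> s' < \<beta> - \<delta> \<and> deriv (HH \<beta> \<delta>) s' = q"
    then have "JH s' = q" using deriv_HH[OF assms(1,2), of s'] by (simp add: JH_def a_def)
    show "s' = s"
    proof (rule ccontr)
      assume "s' \<noteq> s"
      then consider "s' < s" | "s < s'" by linarith
      then show False
      proof cases
        case 1
        have "JH s' < JH s" unfolding JH_def a_def by (rule JH_strict[OF assms(1,2)]) (use 1 s' sb in auto)
        then show False using \<open>JH s' = q\<close> s by simp
      next
        case 2
        have "JH s < JH s'" unfolding JH_def a_def by (rule JH_strict[OF assms(1,2)]) (use 2 s' sb in auto)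
        then show False using \<open>JH s' = q\<close> s by simp
      qed
    qed
  qed
  then show ?thesis using ss1 sb s unfolding JH_def a_def s1_def by simp
qed

lemma sdelta_mono:
  assumes "0 < \<delta>" "\<delta> < \<beta>" "0 < q" "q \<le> q2" "\<beta>/2 - h_tilde \<beta> q / 2 < \<delta>"
  shows "s_delta \<beta> \<delta> q \<le> s_delta \<beta> \<delta> q2 \<and> \<beta>/2 - h_tilde \<beta> q2 / 2 < \<delta>"
proof -
  have b: "\<beta> > 0" using assms by simp
  have c2: "\<beta>/2 - h_tilde \<beta> q2 / 2 < \<delta>" using htilde_mono[OF b assms(3,4)] assms(5) by simp
  have p1: "\<beta> - 2*\<delta> < s_delta \<beta> \<delta> q" "s_delta \<beta> \<delta> q < \<beta> - \<delta>" "Jd \<beta> 0 (\<delta> - \<beta>/2) (s_delta \<beta> \<delta> q) = q"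
    using sdelta_props[OF assms(1,2,3,5)] by auto
  have p2: "\<beta> - 2*\<delta> < s_delta \<beta> \<delta> q2" "s_delta \<beta> \<delta> q2 < \<beta> - \<delta>" "Jd \<beta> 0 (\<delta> - \<beta>/2) (s_delta \<beta> \<delta> q2) = q2"
    using sdelta_props[OF assms(1,2) _ c2] assms by auto
  have "s_delta \<beta> \<delta> q \<le> s_delta \<beta> \<delta> q2"
  proof (rule ccontr)
    assume "\<not> ?thesis"
    then have "Jd \<beta> 0 (\<delta> - \<beta>/2) (s_delta \<beta> \<delta> q2) < Jd \<beta> 0 (\<delta> - \<beta>/2) (s_delta \<beta> \<delta> q)"
      by (intro JH_strict[OF assms(1,2)]) (use p1 p2 assms in auto)
    then show False using p1 p2 assms by simp
  qed
  then show ?thesis using c2 by simp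
qed



lemma sum_lists_prod:
  fixes f :: "nat \<Rightarrow> 'a \<Rightarrow> real"
  assumes "finite K"
  shows "(\<Sum>ks\<in>{ks. set ks \<subseteq> K \<and> length ks = N}. \<Prod>i<N. f i (ks ! i)) = (\<Prod>i<N. \<Sum>k\<in>K. f i k)"
proof (induction N arbitrary: f)
  case 0
  have "{ks. set ks \<subseteq> K \<and> length ks = 0} = {[]}" by auto
  then show ?case by simp
next
  case (Suc N)
  let ?L = "{ks. set ks \<subseteq> K \<and> length ks = N}"
  have inj: "inj_on (\<lambda>(xs, n). n # xs) (?L \<times> K)" by (auto simp: inj_on_def)
  have "(\<Sum>ks\<in>{ks. set ks \<subseteq> K \<and> length ks = Suc N}. \<Prod>i<Suc N. f i (ks ! i))
      = (\<Sum>(xs, n)\<in>?L \<times> K. \<Prod>i<Suc N. f i ((n # xs) ! i))"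
    unfolding lists_length_Suc_eq by (subst sum.reindex[OF inj]) (simp add: case_prod_unfold)
  also have "\<dots> = (\<Sum>(xs, n)\<in>?L \<times> K. f 0 n * (\<Prod>i<N. f (Suc i) (xs ! i)))"
    by (rule sum.cong[OF refl]) (clarsimp simp del: prod.lessThan_Suc simp add: prod.lessThan_Suc_shift)
  also have "\<dots> = (\<Sum>xs\<in>?L. \<Sum>n\<in>K. f 0 n * (\<Prod>i<N. f (Suc i) (xs ! i)))"
    by (rule sum.cartesian_product[symmetric])
  also have "\<dots> = (\<Sum>n\<in>K. f 0 n) * (\<Sum>xs\<in>?L. \<Prod>i<N. f (Suc i) (xs ! i))"
    by (simp add: sum_distrib_left sum_distrib_right sum.swap[of _ K] mult.commute)
  also have "\<dots> = (\<Sum>n\<in>K. f 0 n) * (\<Prod>i<N. \<Sum>k\<in>K. f (Suc i) k)"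
    using Suc.IH[of "\<lambda>i. f (Suc i)"] by simp
  also have "\<dots> = (\<Prod>i<Suc N. \<Sum>k\<in>K. f i k)"
    by (simp only: prod.lessThan_Suc_shift)
  finally show ?case .
qed

lemma prod_list_nth: "(\<Prod>k\<leftarrow>ks. f k) = (\<Prod>i<length ks. f (ks ! i))"
proof (induction ks)
  case Nil then show ?case by simp
next
  case (Cons a ks)
  have "(\<Prod>i<length (a#ks). f ((a#ks)!i)) = f a * (\<Prod>i<length ks. f (ks!i))"
    by (simp only: length_Cons prod.lessThan_Suc_shift nth_Cons_0 nth_Cons_Suc)
  then show ?case using Cons by simp
qed

lemma walk_X_sum: "i \<le> length ks \<Longrightarrow> walk_X ks i = (\<Sum>j<i. ks ! j)"
  unfolding walk_X_def by (simp add: sum_list_sum_nth atLeast0LessThan)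

lemma walk_X_Suc: "i < length ks \<Longrightarrow> walk_X ks (Suc i) = walk_X ks i + ks ! i"
  using walk_X_sum[of i ks] walk_X_sum[of "Suc i" ks] by simp

lemma walk_A_aux: "n \<le> length ks \<Longrightarrow> (\<Sum>j=0..n. walk_X ks j) = (\<Sum>i<n. int (n - i) * ks ! i)"
proof (induction n)
  case 0 then show ?case by (simp add: walk_X_def)
next
  case (Suc n)
  have "(\<Sum>j=0..Suc n. walk_X ks j) = (\<Sum>i<n. int (n - i) * ks ! i) + walk_X ks (Suc n)"
    using Suc by simp
  also have "walk_X ks (Suc n) = (\<Sum>i<Suc n. ks ! i)" using Suc.prems walk_X_sum by simp
  also have "(\<Sum>i<n. int (n - i) * ks ! i) + (\<Sum>i<Suc n. ks ! i) = (\<Sum>i<Suc n. int (Suc n - i) * ks ! i)"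
  proof -
    have "(\<Sum>i<Suc n. int (Suc n - i) * ks ! i) = (\<Sum>i<Suc n. int (n - i) * ks ! i + ks ! i)"
      by (rule sum.cong) (auto simp: algebra_simps of_nat_diff Suc_diff_le)
    also have "\<dots> = (\<Sum>i<Suc n. int (n - i) * ks ! i) + (\<Sum>i<Suc n. ks ! i)" by (simp add: sum.distrib)
    also have "(\<Sum>i<Suc n. int (n - i) * ks ! i) = (\<Sum>i<n. int (n - i) * ks ! i)" by simp
    finally show ?thesis by simp
  qed
  finally show ?case .
qed

lemma walk_A_formula: "length ks = N \<Longrightarrow> walk_A ks N = (\<Sum>i<N. int (N - i) * ks ! i)"
  unfolding walk_A_def using walk_A_aux by simp

lemma E_val:
  assumes "\<beta> > 0" "\<bar>h\<bar> < \<beta>/2"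
  shows "(1 - rr \<beta>)^2 / ((1 - rr \<beta> * exp h) * (1 - rr \<beta> * exp (-h))) = exp (Lf \<beta> h)"
proof -
  have x: "0 < 1 - rr \<beta> * exp h" "0 < 1 - rr \<beta> * exp (-h)" "0 < 1 - rr \<beta>"
    using assms rr_exp_lt1[of h \<beta>] rr_exp_lt1[of "-h" \<beta>] rr_lt1[of \<beta>] by auto
  have e2: "exp (2 * ln (1 - rr \<beta>)) = (1 - rr \<beta>)^2"
  proof -
    have "2 * ln (1 - rr \<beta>) = ln ((1 - rr \<beta>)^2)" using x(3) by (simp add: ln_realpow)
    then show ?thesis using x(3) by simp
  qed
  have "exp (Lf \<beta> h) = exp (2 * ln (1 - rr \<beta>)) / (exp (ln (1 - rr \<beta> * exp h)) * exp (ln (1 - rr \<beta> * exp (-h))))"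
    by (simp add: Lf_def exp_diff exp_add)
  also have "\<dots> = (1 - rr \<beta>)^2 / ((1 - rr \<beta> * exp h) * (1 - rr \<beta> * exp (-h)))"
    using x by (simp only: e2 exp_ln)
  finally show ?thesis by simp
qed

lemma finite_E_le:
  assumes "\<beta> > 0" "\<bar>h\<bar> < \<beta>/2" "finite K"
  shows "(\<Sum>k\<in>K. P_beta \<beta> k * exp (h * real_of_int k)) \<le> exp (Lf \<beta> h)"
proof -
  have "(\<Sum>k\<in>K. P_beta \<beta> k * exp (h * real_of_int k)) \<le> (1 - rr \<beta>)^2 / ((1 - rr \<beta> * exp h) * (1 - rr \<beta> * exp (-h)))"
  proof (rule finite_sum_le_has_sum[OF E_has_sum[OF assms(1,2)] assms(3)])
    fix k assume "k \<in> UNIV - K"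
    have "exp (- \<beta> / 2) < 1" using assms(1) by simp
    then have "c_beta \<beta> > 0" unfolding c_beta_def by (intro divide_pos_pos) (auto intro: add_pos_pos)
    then show "0 \<le> P_beta \<beta> k * exp (h * real_of_int k)" by (simp add: P_beta_def)
  qed auto
  then show ?thesis using E_val[OF assms(1,2)] by simp
qed

lemma P_beta_nonneg: "\<beta> > 0 \<Longrightarrow> P_beta \<beta> k \<ge> 0"
proof -
  assume b: "\<beta> > 0"
  have "exp (- \<beta> / 2) < 1" using b by simp
  then have "c_beta \<beta> > 0" unfolding c_beta_def by (intro divide_pos_pos) (auto intro: add_pos_pos)
  then show ?thesis by (simp add: P_beta_def)
qed

lemma walk_X_nonneg:
  assumes "\<forall>i. 0 < i \<and> i \<le> N \<longrightarrow> walk_X ks i > 0" "j \<le> N"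
  shows "walk_X ks j \<ge> 0"
proof (cases "j = 0")
  case True then show ?thesis by (simp add: walk_X_def)
next
  case False then show ?thesis using assms by fastforce
qed

lemma S_sub_B:
  assumes "length ks = N" "real_of_int (walk_A ks N) = q * real N ^ 2"
    "\<forall>i. 0 < i \<and> i \<le> N \<longrightarrow> walk_X ks i > 0"
  shows "set ks \<subseteq> {- \<lceil>q * real N ^ 2\<rceil> .. \<lceil>q * real N ^ 2\<rceil>}"
proof
  fix k assume "k \<in> set ks"
  then obtain i where i: "i < N" "ks ! i = k" using assms(1) by (auto simp: in_set_conv_nth)
  define A where "A = walk_A ks N"
  have Xle: "walk_X ks j \<le> A" if "j \<le> N" for j
  proof -
    have "walk_X ks j \<le> (\<Sum>j'=0..N. walk_X ks j')"
      by (rule member_le_sum) (use that walk_X_nonneg[OF assms(3)] in auto)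
    then show ?thesis by (simp add: A_def walk_A_def)
  qed
  have X0: "walk_X ks j \<ge> 0" if "j \<le> N" for j using walk_X_nonneg[OF assms(3) that] .
  have "k = walk_X ks (Suc i) - walk_X ks i" using walk_X_Suc[of i ks] i assms(1) by simp
  then have "\<bar>k\<bar> \<le> A" using Xle[of i] Xle[of "Suc i"] X0[of i] X0[of "Suc i"] i by auto
  moreover have "A \<le> \<lceil>q * real N ^ 2\<rceil>"
  proof -
    have "real_of_int A \<le> real_of_int \<lceil>q * real N ^ 2\<rceil>" using assms(2) le_of_int_ceiling by (simp add: A_def)
    then show ?thesis by linarith
  qed
  ultimately show "k \<in> {- \<lceil>q * real N ^ 2\<rceil> .. \<lceil>q * real N ^ 2\<rceil>}" by auto
qed

lemma chern:
  fixes \<beta> \<delta> q b s :: real and N :: nat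
  assumes b0: "\<beta> > 0" and bd: "\<delta> - \<beta>/2 \<le> b"
    and dom: "\<forall>i<N. \<bar>b + s * real (N - i) / real N\<bar> < \<beta>/2"
  shows "DD \<beta> N q \<delta> \<le> exp (- s * q * real N) * (\<Prod>i<N. exp (Lf \<beta> (b + s * real (N - i) / real N)))"
proof -
  define S where "S = {ks. length ks = N \<and> real_of_int (walk_A ks N) = q * real N ^ 2 \<and> (\<forall>i. 0 < i \<and> i \<le> N \<longrightarrow> walk_X ks i > 0)}"
  define lam where "lam i = b + s * real (N - i) / real N" for i
  define tm where "tm ks = path_prob \<beta> ks * exp ((\<delta> - \<beta>/2) * real_of_int (walk_X ks N))" for ks
  define T where "T ks = exp (- s * q * real N) * (\<Prod>i<N. P_beta \<beta> (ks ! i) * exp (lam i * real_of_int (ks ! i)))" for ks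
  define K where "K = {- \<lceil>q * real N ^ 2\<rceil> .. \<lceil>q * real N ^ 2\<rceil>}"
  define B where "B = {ks. set ks \<subseteq> K \<and> length ks = N}"
  have finB: "finite B" unfolding B_def K_def by (rule finite_lists_length_eq) simp
  have SB: "S \<subseteq> B" unfolding S_def B_def K_def using S_sub_B by blast
  have finS: "finite S" using finite_subset[OF SB finB] .
  have Tnn: "T ks \<ge> 0" for ks unfolding T_def using P_beta_nonneg[OF b0] by (auto intro!: prod_nonneg mult_nonneg_nonneg)
  have tmT: "tm ks \<le> T ks" if ks: "ks \<in> S" for ks
  proof -
    have len: "length ks = N" using ks by (simp add: S_def)
    have pp: "path_prob \<beta> ks = (\<Prod>i<N. P_beta \<beta> (ks ! i))" unfolding path_prob_def prod_list_nth len ..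
    have ppn: "path_prob \<beta> ks \<ge> 0" unfolding pp using P_beta_nonneg[OF b0] by (auto intro: prod_nonneg)
    define X where "X = real_of_int (walk_X ks N)"
    have X: "X = (\<Sum>i<N. real_of_int (ks ! i))" unfolding X_def using walk_X_sum[of N ks] len by simp
    have Xnn: "X \<ge> 0" unfolding X_def using walk_X_nonneg[of N ks N] ks by (simp add: S_def)
    have A: "(\<Sum>i<N. real (N - i) * real_of_int (ks ! i)) = q * real N ^ 2"
      using ks walk_A_formula[OF len] by (simp add: S_def)
    have sumlam: "(\<Sum>i<N. lam i * real_of_int (ks ! i)) = b * X + s * q * real N"
    proof -
      have "(\<Sum>i<N. lam i * real_of_int (ks ! i)) = (\<Sum>i<N. b * real_of_int (ks ! i) + s / real N * (real (N - i) * real_of_int (ks ! i)))"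
      proof -
        have e: "(b + s * r / real N) * k = b * k + s / real N * (r * k)" for r k :: real by (simp add: algebra_simps)
        show ?thesis by (rule sum.cong[OF refl]) (simp only: lam_def e)
      qed
      also have "\<dots> = b * X + s / real N * (q * real N ^ 2)"
        by (simp only: sum.distrib sum_distrib_left[symmetric] X A)
      also have "s / real N * (q * real N ^ 2) = s * q * real N"
        by (cases "N = 0") (auto simp: power2_eq_square)
      finally show ?thesis .
    qed
    have "tm ks = path_prob \<beta> ks * exp ((\<delta> - \<beta>/2) * X)" by (simp add: tm_def X_def)
    also have "\<dots> \<le> path_prob \<beta> ks * exp (b * X)"
      using ppn Xnn bd by (intro mult_left_mono) (auto intro!: mult_right_mono)
    also have "b * X = (\<Sum>i<N. lam i * real_of_int (ks ! i)) - s * q * real N" using sumlam by simp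
    also have "path_prob \<beta> ks * exp ((\<Sum>i<N. lam i * real_of_int (ks ! i)) - s * q * real N) = T ks"
    proof -
      have "exp ((\<Sum>i<N. lam i * real_of_int (ks ! i)) - s * q * real N)
          = exp (- s * q * real N) * (\<Prod>i<N. exp (lam i * real_of_int (ks ! i)))"
      proof -
        have e1: "exp (\<Sum>i<N. lam i * real_of_int (ks ! i)) = (\<Prod>i<N. exp (lam i * real_of_int (ks ! i)))"
          by (rule exp_sum) simp
        have "exp ((\<Sum>i<N. lam i * real_of_int (ks ! i)) - s * q * real N)
            = exp (- s * q * real N) * exp (\<Sum>i<N. lam i * real_of_int (ks ! i))"
          by (simp add: exp_diff exp_minus divide_inverse)
        then show ?thesis using e1 by simp
      qed
      then show ?thesis unfolding T_def pp by (simp only: prod.distrib mult.assoc mult.left_commute)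
    qed
    finally show ?thesis .
  qed
  have "DD \<beta> N q \<delta> = sum tm S" unfolding DD_def tm_def S_def[symmetric] using finS by simp
  also have "\<dots> \<le> sum T S" using tmT by (rule sum_mono)
  also have "\<dots> \<le> sum T B" using SB finB Tnn by (intro sum_mono2) auto
  also have "sum T B = exp (- s * q * real N) * (\<Prod>i<N. \<Sum>k\<in>K. P_beta \<beta> k * exp (lam i * real_of_int k))"
  proof -
    have fK: "finite K" by (simp add: K_def)
    have sl: "(\<Sum>ks\<in>B. \<Prod>i<N. P_beta \<beta> (ks ! i) * exp (lam i * real_of_int (ks ! i)))
        = (\<Prod>i<N. \<Sum>k\<in>K. P_beta \<beta> k * exp (lam i * real_of_int k))"
      unfolding B_def by (rule sum_lists_prod[OF fK])
    show ?thesis unfolding T_def sum_distrib_left[symmetric] sl ..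
  qed
  also have "\<dots> \<le> exp (- s * q * real N) * (\<Prod>i<N. exp (Lf \<beta> (lam i)))"
  proof (intro mult_left_mono prod_mono conjI)
    fix i assume "i \<in> {..<N}"
    then have d: "\<bar>lam i\<bar> < \<beta>/2" using dom by (simp add: lam_def)
    show "0 \<le> (\<Sum>k\<in>K. P_beta \<beta> k * exp (lam i * real_of_int k))"
      using P_beta_nonneg[OF b0] by (auto intro: sum_nonneg)
    show "(\<Sum>k\<in>K. P_beta \<beta> k * exp (lam i * real_of_int k)) \<le> exp (Lf \<beta> (lam i))"
      by (rule finite_E_le[OF b0 d]) (simp add: K_def)
  qed simp
  finally show ?thesis by (simp add: lam_def)
qed



lemma Lf_lip:
  assumes "\<beta> > 0" "m < \<beta>/2" "\<bar>u\<bar> \<le> m" "\<bar>v\<bar> \<le> m"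
  shows "\<bar>Lf \<beta> u - Lf \<beta> v\<bar> \<le> Ld \<beta> m * \<bar>u - v\<bar>"
proof -
  have main: "\<bar>Lf \<beta> y - Lf \<beta> x\<bar> \<le> Ld \<beta> m * \<bar>y - x\<bar>" if xy: "x < y" "\<bar>x\<bar> \<le> m" "\<bar>y\<bar> \<le> m" for x y
  proof -
    have der: "DERIV (Lf \<beta>) t :> Ld \<beta> t" if "x \<le> t" "t \<le> y" for t
    proof -
      have "\<bar>t\<bar> < \<beta>/2" using that xy assms(2) by (simp add: abs_le_iff abs_less_iff) 
      then show ?thesis by (rule Lf_deriv)
    qed
    obtain z where z: "x < z" "z < y" "Lf \<beta> y - Lf \<beta> x = (y - x) * Ld \<beta> z"
      using MVT2[OF xy(1) der] by blast
    have "\<bar>z\<bar> \<le> m" using z xy by auto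
    then have "\<bar>Ld \<beta> z\<bar> \<le> Ld \<beta> m" using Ld_abs_le assms by blast
    then show ?thesis using z xy by (simp add: abs_mult mult.commute mult_left_mono)
  qed
  show ?thesis
  proof (cases u v rule: linorder_cases)
    case less then show ?thesis using main[of u v] assms by (simp add: abs_minus_commute)
  next
    case equal then show ?thesis by simp
  next
    case greater then show ?thesis using main[of v u] assms by simp
  qed
qed

lemma integral_pieces:
  fixes f :: "real \<Rightarrow> real"
  assumes "continuous_on {0..1} f" "N > 0" "n \<le> N"
  shows "(\<Sum>j<n. integral {real j / real N .. real (Suc j) / real N} f) = integral {0 .. real n / real N} f"
  using assms(3)
proof (induction n)
  case 0 then show ?case by simp
next
  case (Suc n)
  have int: "f integrable_on {0 .. real (Suc n) / real N}"
    by (rule integrable_on_subinterval[OF integrable_continuous_interval[OF assms(1)]])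
       (use Suc.prems assms(2) in auto)
  have "(\<Sum>j<Suc n. integral {real j / real N .. real (Suc j) / real N} f)
      = integral {0 .. real n / real N} f + integral {real n / real N .. real (Suc n) / real N} f"
    using Suc by simp
  also have "\<dots> = integral {0 .. real (Suc n) / real N} f"
    by (rule Henstock_Kurzweil_Integration.integral_combine) (use assms(2) int in \<open>auto simp: divide_right_mono\<close>)
  finally show ?case .
qed

lemma riemann:
  assumes b0: "\<beta> > 0" and m: "0 \<le> m" "m < \<beta>/2" and dom: "\<forall>x\<in>{0..1}. \<bar>b + s * x\<bar> \<le> m"
  shows "(\<Sum>i<N. Lf \<beta> (b + s * real (N - i) / real N))
     \<le> real N * integral {0..1} (\<lambda>x. Lf \<beta> (b + s * x)) + Ld \<beta> m * \<bar>s\<bar>"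
proof (cases "N = 0")
  case True
  have "0 \<le> Ld \<beta> m" using Ld_mono[of \<beta> 0 m] Ld_0 b0 m by auto
  then show ?thesis using True by simp
next
  case False
  then have N: "N > 0" by simp
  define f where "f x = Lf \<beta> (b + s * x)" for x
  define K where "K = Ld \<beta> m"
  have K0: "0 \<le> K" using Ld_mono[of \<beta> 0 m] Ld_0 b0 m by (auto simp: K_def)
  have cont: "continuous_on {0..1} f"
    unfolding f_def by (rule continuous_on_compose2[OF Lf_cont]) (use dom m in \<open>auto intro!: continuous_intros\<close>)
  have reidx: "(\<Sum>i<N. Lf \<beta> (b + s * real (N - i) / real N)) = (\<Sum>j<N. f (real (Suc j) / real N))"
  proof -
    have "(\<Sum>j<N. f (real (Suc j) / real N)) = (\<Sum>i<N. f (real (Suc (N - Suc i)) / real N))"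
      by (rule sum.nat_diff_reindex[symmetric])
    also have "\<dots> = (\<Sum>i<N. Lf \<beta> (b + s * real (N - i) / real N))"
      by (rule sum.cong[OF refl]) (auto simp: f_def Suc_diff_Suc)
    finally show ?thesis ..
  qed
  have piece: "f (real (Suc j) / real N) / real N \<le> integral {real j / real N .. real (Suc j) / real N} f + K * \<bar>s\<bar> / real N / real N"
    if j: "j < N" for j
  proof -
    define lo where "lo = real j / real N"
    define hi where "hi = real (Suc j) / real N"
    have h1: "real (Suc j) \<le> real N" using j by simp
    have h2: "hi \<le> 1" unfolding hi_def using h1 N by (simp add: divide_le_eq_1)
    have lohi: "0 \<le> lo" "lo \<le> hi" "hi \<le> 1" "hi - lo = 1 / real N"
      using j N h2 by (auto simp: lo_def hi_def divide_right_mono add_divide_distrib)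
    have "integral {lo..hi} (\<lambda>x. f hi - K * \<bar>s\<bar> / real N) \<le> integral {lo..hi} f"
    proof (rule integral_le)
      show "(\<lambda>x. f hi - K * \<bar>s\<bar> / real N) integrable_on {lo..hi}" by (rule integrable_continuous_interval) (rule continuous_on_const)
      show "f integrable_on {lo..hi}"
        by (rule integrable_on_subinterval[OF integrable_continuous_interval[OF cont]]) (use lohi in auto)
    next
      fix x assume x: "x \<in> {lo..hi}"
      have d1: "\<bar>b + s * hi\<bar> \<le> m" using dom lohi by auto
      have d2: "\<bar>b + s * x\<bar> \<le> m" using dom lohi x by auto
      have "\<bar>f hi - f x\<bar> \<le> K * \<bar>(b + s * hi) - (b + s * x)\<bar>"
        unfolding f_def K_def by (rule Lf_lip[OF b0 m(2) d1 d2])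
      also have "\<bar>(b + s * hi) - (b + s * x)\<bar> = \<bar>s\<bar> * \<bar>hi - x\<bar>" by (simp add: abs_mult[symmetric] algebra_simps)
      also have "\<dots> \<le> \<bar>s\<bar> * (1 / real N)" using x lohi by (intro mult_left_mono) auto
      finally have "\<bar>f hi - f x\<bar> \<le> K * (\<bar>s\<bar> * (1 / real N))" using K0 by (simp add: mult_left_mono)
      then show "f hi - K * \<bar>s\<bar> / real N \<le> f x" by (simp add: abs_le_iff)
    qed
    also have "integral {lo..hi} (\<lambda>x. f hi - K * \<bar>s\<bar> / real N) = (f hi - K * \<bar>s\<bar> / real N) / real N"
      using lohi by simp
    finally show ?thesis unfolding lo_def[symmetric] hi_def[symmetric] by (simp add: diff_divide_distrib)
  qed
  have "(\<Sum>j<N. f (real (Suc j) / real N) / real N) \<le> (\<Sum>j<N. integral {real j / real N .. real (Suc j) / real N} f + K * \<bar>s\<bar> / real N / real N)"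
    by (rule sum_mono) (use piece in auto)
  also have "\<dots> = integral {0..1} f + K * \<bar>s\<bar> / real N"
    using integral_pieces[OF cont N, of N] N by (simp add: sum.distrib)
  finally have "(\<Sum>j<N. f (real (Suc j) / real N)) / real N \<le> integral {0..1} f + K * \<bar>s\<bar> / real N"
    by (simp add: sum_divide_distrib)
  then have "(\<Sum>j<N. f (real (Suc j) / real N)) \<le> real N * integral {0..1} f + K * \<bar>s\<bar>"
    using N by (simp add: divide_simps algebra_simps)
  then show ?thesis unfolding reidx f_def[abs_def] K_def by simp
qed



lemma DD_bound:
  fixes \<beta> \<delta> q b s m :: real and N :: nat
  assumes b0: "\<beta> > 0" and bd: "\<delta> - \<beta>/2 \<le> b" and m: "0 \<le> m" "m < \<beta>/2"
    and dom: "\<forall>x\<in>{0..1}. \<bar>b + s * x\<bar> \<le> m"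
  shows "DD \<beta> N q \<delta> \<le> exp (Ld \<beta> m * \<bar>s\<bar>) * exp (real N * (integral {0..1} (\<lambda>x. Lf \<beta> (b + s * x)) - s * q))"
proof -
  have cdom: "\<forall>i<N. \<bar>b + s * real (N - i) / real N\<bar> < \<beta>/2"
  proof (intro allI impI)
    fix i assume i: "i < N"
    have "real (N - i) / real N \<in> {0..1}" using i by auto
    then have "\<bar>b + s * (real (N - i) / real N)\<bar> \<le> m" using dom by blast
    then show "\<bar>b + s * real (N - i) / real N\<bar> < \<beta>/2" using m by simp
  qed
  have "DD \<beta> N q \<delta> \<le> exp (- s * q * real N) * (\<Prod>i<N. exp (Lf \<beta> (b + s * real (N - i) / real N)))"
    by (rule chern[OF b0 bd cdom])
  also have "\<dots> = exp (- s * q * real N + (\<Sum>i<N. Lf \<beta> (b + s * real (N - i) / real N)))"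
    by (simp only: exp_add exp_sum[OF finite_lessThan])
  also have "\<dots> \<le> exp (- s * q * real N + (real N * integral {0..1} (\<lambda>x. Lf \<beta> (b + s * x)) + Ld \<beta> m * \<bar>s\<bar>))"
    using riemann[OF b0 m dom, of N] by simp
  also have "\<dots> = exp (Ld \<beta> m * \<bar>s\<bar>) * exp (real N * (integral {0..1} (\<lambda>x. Lf \<beta> (b + s * x)) - s * q))"
    by (simp add: exp_add[symmetric] algebra_simps)
  finally show ?thesis .
qed

lemma seg_abs:
  fixes a s x :: real
  assumes "0 \<le> x" "x \<le> 1"
  shows "\<bar>a + s * x\<bar> \<le> max \<bar>a\<bar> \<bar>a + s\<bar>"
proof (cases "s \<ge> 0")
  case True
  then have "0 \<le> s * x" "s * x \<le> s" using assms by (auto simp: mult_left_le)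
  then show ?thesis by (simp add: abs_if max_def)
next
  case False
  have "(-s) * x \<le> -s" using assms False by (simp add: mult_left_le)
  moreover have "0 \<le> (-s) * x" using assms False by (intro mult_nonneg_nonneg) auto
  ultimately have "s * x \<le> 0" "s \<le> s * x" by auto
  then show ?thesis by (simp add: abs_if max_def)
qed

lemma Ld_nonneg: "\<beta> > 0 \<Longrightarrow> 0 \<le> m \<Longrightarrow> m < \<beta>/2 \<Longrightarrow> 0 \<le> Ld \<beta> m"
  using Ld_mono[of \<beta> 0 m] Ld_0 by auto

theorem mainTheorem18:
  fixes \<beta> \<delta> q2 :: real
  assumes "\<beta> > 0" and "0 \<le> \<delta>" and "\<delta> < \<beta>" and "q2 > 0"
  shows "\<exists>c>0. \<forall>(N::nat) (q::real). 0 < q \<and> q \<le> q2 \<longrightarrow>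
           DD \<beta> N q \<delta> \<le> c * exp (real N * psi \<beta> q \<delta>)"
proof -
  note b0 = assms(1)
  define h2 where "h2 = h_tilde \<beta> q2"
  have h2: "0 < h2" "h2 < \<beta>" using htilde_props[OF b0 assms(4)] by (auto simp: h2_def)
  define m1 where "m1 = h2 / 2"
  define K1 where "K1 = Ld \<beta> m1 * h2"
  define a where "a = \<delta> - \<beta>/2"
  define s2 where "s2 = s_delta \<beta> \<delta> q2"
  define m2 where "m2 = max \<bar>a\<bar> (max \<bar>\<beta>/2 - \<delta>\<bar> \<bar>a + s2\<bar>)"
  define S2 where "S2 = max \<bar>\<beta> - 2*\<delta>\<bar> \<bar>s2\<bar>"
  define K2 where "K2 = Ld \<beta> m2 * S2"
  define c where "c = exp K1 + exp K2"
  have cpos: "c > 0" by (simp add: c_def add_pos_pos)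
  have bound: "DD \<beta> N q \<delta> \<le> c * exp (real N * psi \<beta> q \<delta>)" if q: "0 < q" "q \<le> q2" for N q
  proof (cases "0 \<le> \<delta> \<and> \<delta> \<le> delta0 \<beta> q")
    case True
    define h where "h = h_tilde \<beta> q"
    have h: "0 < h" "h < \<beta>" using htilde_props[OF b0 q(1)] by (auto simp: h_def)
    have hh2: "h \<le> h2" unfolding h_def h2_def by (rule htilde_mono[OF b0 q])
    have psi: "psi \<beta> q \<delta> = GG \<beta> h - q * h" using True by (simp add: psi_def h_def)
    have bd: "\<delta> - \<beta>/2 \<le> - h/2" using True by (simp add: delta0_def h_def)
    have m1: "0 \<le> m1" "m1 < \<beta>/2" using h2 by (auto simp: m1_def)
    have dom: "\<forall>x\<in>{0..1}. \<bar>- h/2 + h * x\<bar> \<le> m1"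
    proof
      fix x :: real assume x: "x \<in> {0..1}"
      have e: "- h/2 + h * x = h * (x - 1/2)" by (simp add: algebra_simps)
      have "\<bar>- h/2 + h * x\<bar> = h * \<bar>x - 1/2\<bar>" unfolding e abs_mult using h by simp
      also have "\<dots> \<le> h * (1/2)" using x h by (intro mult_left_mono) (auto simp: abs_if)
      also have "\<dots> \<le> m1" using hh2 by (simp add: m1_def)
      finally show "\<bar>- h/2 + h * x\<bar> \<le> m1" .
    qed
    have int: "integral {0..1} (\<lambda>x. Lf \<beta> (- h/2 + h * x)) = GG \<beta> h"
    proof -
      have "integral {0..1} (\<lambda>x. Lf \<beta> (- h/2 + h * x)) = Jf \<beta> (1/2) 0 h"
        unfolding Jf_def by (rule integral_cong) (simp add: algebra_simps)
      also have "\<dots> = GG \<beta> h" using GG_eq[OF b0, of h] h by simp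
      finally show ?thesis .
    qed
    have "DD \<beta> N q \<delta> \<le> exp (Ld \<beta> m1 * \<bar>h\<bar>) * exp (real N * (integral {0..1} (\<lambda>x. Lf \<beta> (- h/2 + h * x)) - h * q))"
      by (rule DD_bound[OF b0 bd m1 dom])
    also have "\<dots> = exp (Ld \<beta> m1 * h) * exp (real N * psi \<beta> q \<delta>)"
      unfolding int psi using h by (simp add: algebra_simps)
    also have "\<dots> \<le> exp K1 * exp (real N * psi \<beta> q \<delta>)"
    proof -
      have "Ld \<beta> m1 * h \<le> Ld \<beta> m1 * h2" using hh2 Ld_nonneg[OF b0 m1] by (intro mult_left_mono) auto
      then show ?thesis by (simp add: K1_def)
    qed
    also have "\<dots> \<le> c * exp (real N * psi \<beta> q \<delta>)" by (simp add: c_def)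
    finally show ?thesis .
  next
    case False
    define h where "h = h_tilde \<beta> q"
    have h: "0 < h" "h < \<beta>" using htilde_props[OF b0 q(1)] by (auto simp: h_def)
    have cond: "\<beta>/2 - h_tilde \<beta> q / 2 < \<delta>" using False assms(2) by (simp add: delta0_def)
    have d0: "0 < \<delta>" using cond h by (simp add: h_def)
    define s where "s = s_delta \<beta> \<delta> q"
    have sp: "\<beta> - 2*\<delta> < s" "s < \<beta> - \<delta>" using sdelta_props[OF d0 assms(3) q(1) cond] by (auto simp: s_def)
    have sm: "s \<le> s2" "\<beta>/2 - h_tilde \<beta> q2 / 2 < \<delta>" using sdelta_mono[OF d0 assms(3) q cond] by (auto simp: s_def s2_def)
    have s2p: "\<beta> - 2*\<delta> < s2" "s2 < \<beta> - \<delta>" using sdelta_props[OF d0 assms(3) assms(4) sm(2)] by (auto simp: s2_def)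
    have psi: "psi \<beta> q \<delta> = HH \<beta> \<delta> s - q * s" unfolding psi_def s_def using False by (simp only: if_False)
    have bd: "\<delta> - \<beta>/2 \<le> a" by (simp add: a_def)
    have m2: "0 \<le> m2" "m2 < \<beta>/2"
      using d0 assms(3) s2p by (auto simp: m2_def a_def abs_if max_def)
    have dom: "\<forall>x\<in>{0..1}. \<bar>a + s * x\<bar> \<le> m2"
    proof
      fix x :: real assume x: "x \<in> {0..1}"
      have "\<bar>a + s * x\<bar> \<le> max \<bar>a\<bar> \<bar>a + s\<bar>" using seg_abs x by auto
      also have "\<bar>a + s\<bar> \<le> max \<bar>\<beta>/2 - \<delta>\<bar> \<bar>a + s2\<bar>" using sp sm(1) by (auto simp: a_def abs_if max_def)
      finally show "\<bar>a + s * x\<bar> \<le> m2" unfolding m2_def by auto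
    qed
    have int: "integral {0..1} (\<lambda>x. Lf \<beta> (a + s * x)) = HH \<beta> \<delta> s"
    proof -
      have "integral {0..1} (\<lambda>x. Lf \<beta> (a + s * x)) = Jf \<beta> 0 (\<delta> - \<beta>/2) s"
        unfolding Jf_def a_def by (rule integral_cong) (simp add: algebra_simps)
      also have "\<dots> = HH \<beta> \<delta> s"
      proof -
        have "-\<delta> < s" using sp assms(3) by linarith
        then show ?thesis using HH_eq[OF d0 assms(3), of s] sp by simp
      qed
      finally show ?thesis .
    qed
    have "DD \<beta> N q \<delta> \<le> exp (Ld \<beta> m2 * \<bar>s\<bar>) * exp (real N * (integral {0..1} (\<lambda>x. Lf \<beta> (a + s * x)) - s * q))"
      by (rule DD_bound[OF b0 bd m2 dom])
    also have "\<dots> = exp (Ld \<beta> m2 * \<bar>s\<bar>) * exp (real N * psi \<beta> q \<delta>)"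
      unfolding int psi by (simp add: algebra_simps)
    also have "\<dots> \<le> exp K2 * exp (real N * psi \<beta> q \<delta>)"
    proof -
      have "\<bar>s\<bar> \<le> S2" using sp sm(1) by (auto simp: S2_def abs_if max_def)
      then have "Ld \<beta> m2 * \<bar>s\<bar> \<le> Ld \<beta> m2 * S2" using Ld_nonneg[OF b0 m2] by (intro mult_left_mono) auto
      then show ?thesis by (simp add: K2_def)
    qed
    also have "\<dots> \<le> c * exp (real N * psi \<beta> q \<delta>)" by (simp add: c_def)
    finally show ?thesis .
  qed
  show ?thesis using cpos bound by blast
qed

end
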